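(* Let $p$ be a monotone graph parameter such that $p(G\uplus H)=\max(p(G),p(H))$ for all graphs $G,H$. For every integer $r\ge2$, a class of graphs $\mathcal{G}$ is fractionally-$p$-edge-fragile if and only if $\mathcal{A}_{\mathcal{G}}^{(r)}$ is $p$-pliable.
   Context: $p$ monotone means $p(H)\le p(G)$ for every subgraph $H$ of $G$; $\uplus$ is disjoint union. A class $\mathcal{G}$ is fractionally-$p$-edge-fragile if for every $\varepsilon>0$ there is $k$ such that every $G\in\mathcal{G}$ has a probability distribution $\pi$ over sets $F\subseteq E(G)$ with $p(G-F)\le k$ such that $\Pr_{F\sim\pi}[e\in F]\le\varepsilon$ for every $e\in E(G)$. A $\sigma$-structure $\mathbb{A}$ is a finite domain $A$ with functions $f^{\mathbb{A}}\colon A^{\mathrm{ar}(f)}\to\mathbb{Q}_{\ge0}$, $f\in\sigma$. $\mathrm{opt}(\mathbb{A},\mathbb{B})=\max_{h\colon A\to B}\sum_{f}\sum_{\bar x}f^{\mathbb{A}}(\bar x)f^{\mathbb{B}}(h(\bar x))$ over all maps; $d_{\mathrm{opt}}(\mathbb{A},\mathbb{B})=\sup_{\mathbb{C}}|\ln\mathrm{opt}(\mathbb{A},\mathbb{C})-\ln\mathrm{opt}(\mathbb{B},\mathbb{C})|$ over $\sigma$-structures $\mathbb{C}$ ($\ln0=-\infty$, $|\ln0-\ln0|=0$). The Gaifman graph of $\mathbb{A}$: vertex set $A$, distinct $u,v$ adjacent iff they occur together in a tuple of positive value; $p(\mathbb{A})$ is $p$ of it. A class $\mathcal{A}$ is $p$-pliable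 if for every $\varepsilon>0$ there is $k$ such that every $\mathbb{A}\in\mathcal{A}$ (signature $\sigma$) has a $\sigma$-structure $\mathbb{B}$ with $p(\mathbb{B})\le k$ and $d_{\mathrm{opt}}(\mathbb{A},\mathbb{B})\le\varepsilon$. $\mathcal{A}_{\mathcal{G}}^{(r)}$ is the class of all structures (any signature) whose Gaifman graph is in $\mathcal{G}$ and whose symbols all have arity at most $r$. *)

theory Defs
  imports "HOL-Probability.Probability_Mass_Function" "HOL-Library.FuncSet" "HOL-Library.Extended_Real"
begin

type_synonym 'v graph = "'v set \<times> 'v set set"

definition verts :: "'v graph \<Rightarrow> 'v set" where "verts G = fst G"
definition edges :: "'v graph \<Rightarrow> 'v set set" where "edges G = snd G"

definition wf_graph :: "'v graph \<Rightarrow> bool" where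
  "wf_graph G \<longleftrightarrow> finite (verts G) \<and> (\<forall>e\<in>edges G. e \<subseteq> verts G \<and> card e = 2)"

definition subgraph :: "'v graph \<Rightarrow> 'v graph \<Rightarrow> bool" where
  "subgraph H G \<longleftrightarrow> wf_graph H \<and> verts H \<subseteq> verts G \<and> edges H \<subseteq> edges G"

definition graph_iso :: "'v graph \<Rightarrow> 'v graph \<Rightarrow> bool" where
  "graph_iso G H \<longleftrightarrow> (\<exists>f. bij_betw f (verts G) (verts H) \<and> edges H = (\<lambda>e. f ` e) ` edges G)"

definition graph_union :: "'v graph \<Rightarrow> 'v graph \<Rightarrow> 'v graph" where
  "graph_union G H = (verts G \<union> verts H, edges G \<union> edges H)"

definition delete_edges :: "'v graph \<Rightarrow> 'v set set \<Rightarrow> 'v graph" where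
  "delete_edges G F = (verts G, edges G - F)"

definition graph_parameter :: "('v graph \<Rightarrow> nat) \<Rightarrow> bool" where
  "graph_parameter p \<longleftrightarrow> (\<forall>G H. wf_graph G \<longrightarrow> wf_graph H \<longrightarrow> graph_iso G H \<longrightarrow> p G = p H)"

definition monotone_param :: "('v graph \<Rightarrow> nat) \<Rightarrow> bool" where
  "monotone_param p \<longleftrightarrow> (\<forall>G H. wf_graph G \<longrightarrow> subgraph H G \<longrightarrow> p H \<le> p G)"

text \<open>Disjoint union (vertex sets disjoint; arbitrary graphs are reduced to this case via
  isomorphism invariance).\<close>
definition max_on_disjoint_union :: "('v graph \<Rightarrow> nat) \<Rightarrow> bool" where
  "max_on_disjoint_union p \<longleftrightarrow> (\<forall>G H. wf_graph G \<longrightarrow> wf_graph H \<longrightarrow> verts G \<inter> verts H = {} \<longrightarrow>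
      p (graph_union G H) = max (p G) (p H))"

definition frac_edge_fragile :: "('v graph \<Rightarrow> nat) \<Rightarrow> 'v graph set \<Rightarrow> bool" where
  "frac_edge_fragile p \<G> \<longleftrightarrow>
    (\<forall>\<epsilon>::real. \<epsilon> > 0 \<longrightarrow> (\<exists>k::nat. \<forall>G\<in>\<G>. \<exists>\<pi> :: 'v set set pmf.
        (\<forall>F\<in>set_pmf \<pi>. F \<subseteq> edges G \<and> p (delete_edges G F) \<le> k) \<and>
        (\<forall>e\<in>edges G. measure_pmf.prob \<pi> {F. e \<in> F} \<le> \<epsilon>)))"

type_synonym signature = "nat set \<times> (nat \<Rightarrow> nat)"
type_synonym 'v struct = "'v set \<times> (nat \<Rightarrow> 'v list \<Rightarrow> rat)"

definition sig_syms :: "signature \<Rightarrow> nat set" where "sig_syms s = fst s"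
definition sig_ar :: "signature \<Rightarrow> nat \<Rightarrow> nat" where "sig_ar s = snd s"

definition dom :: "'v struct \<Rightarrow> 'v set" where "dom S = fst S"
definition interp :: "'v struct \<Rightarrow> nat \<Rightarrow> 'v list \<Rightarrow> rat" where "interp S = snd S"

definition tuples :: "'v set \<Rightarrow> nat \<Rightarrow> 'v list set" where
  "tuples A n = {xs. length xs = n \<and> set xs \<subseteq> A}"

definition is_sig :: "signature \<Rightarrow> bool" where
  "is_sig s \<longleftrightarrow> finite (sig_syms s)"

definition is_struct :: "signature \<Rightarrow> 'v struct \<Rightarrow> bool" where
  "is_struct s S \<longleftrightarrow> finite (dom S) \<and> dom S \<noteq> {} \<and>
     (\<forall>f\<in>sig_syms s. \<forall>xs\<in>tuples (dom S) (sig_ar s f). interp S f xs \<ge> 0)"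

definition opt :: "signature \<Rightarrow> 'v struct \<Rightarrow> 'v struct \<Rightarrow> real" where
  "opt s SA SB = Max ((\<lambda>h. \<Sum>f\<in>sig_syms s. \<Sum>xs\<in>tuples (dom SA) (sig_ar s f).
        of_rat (interp SA f xs) * of_rat (interp SB f (map h xs))) ` (dom SA \<rightarrow>\<^sub>E dom SB))"

definition ln_dist :: "real \<Rightarrow> real \<Rightarrow> ereal" where
  "ln_dist a b = (if a = 0 \<and> b = 0 then 0
                  else if a = 0 \<or> b = 0 then \<infinity>
                  else ereal \<bar>ln a - ln b\<bar>)"

definition d_opt :: "signature \<Rightarrow> 'v struct \<Rightarrow> 'v struct \<Rightarrow> ereal" where
  "d_opt s SA SB = (SUP SC\<in>{SC :: 'v struct. is_struct s SC}. ln_dist (opt s SA SC) (opt s SB SC))"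

definition gaifman :: "signature \<Rightarrow> 'v struct \<Rightarrow> 'v graph" where
  "gaifman s S = (dom S, {{u, v} | u v. u \<noteq> v \<and>
      (\<exists>f\<in>sig_syms s. \<exists>xs\<in>tuples (dom S) (sig_ar s f).
          interp S f xs > 0 \<and> u \<in> set xs \<and> v \<in> set xs)})"

definition struct_class :: "'v graph set \<Rightarrow> nat \<Rightarrow> (signature \<times> 'v struct) set" where
  "struct_class \<G> r = {(s, S). is_sig s \<and> is_struct s S \<and>
      (\<forall>f\<in>sig_syms s. sig_ar s f \<le> r) \<and> gaifman s S \<in> \<G>}"

definition pliable :: "('v graph \<Rightarrow> nat) \<Rightarrow> (signature \<times> 'v struct) set \<Rightarrow> bool" where
  "pliable p \<A> \<longleftrightarrow>
    (\<forall>\<epsilon>::real. \<epsilon> > 0 \<longrightarrow> (\<exists>k::nat. \<forall>(s, SA)\<in>\<A>. \<exists>SB :: 'v struct.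
        is_struct s SB \<and> p (gaifman s SB) \<le> k \<and> d_opt s SA SB \<le> ereal \<epsilon>))"

end

theory Submission
  imports Defs
begin


definition val :: "signature \<Rightarrow> 'v struct \<Rightarrow> 'v struct \<Rightarrow> ('v \<Rightarrow> 'v) \<Rightarrow> real" where
  "val s SA SC h = (\<Sum>f\<in>sig_syms s. \<Sum>xs\<in>tuples (dom SA) (sig_ar s f).
        of_rat (interp SA f xs) * of_rat (interp SC f (map h xs)))"

lemma finite_tuples[simp]: "finite A \<Longrightarrow> finite (tuples A n)"
proof -
  assume "finite A"
  have "tuples A n = {xs. set xs \<subseteq> A \<and> length xs = n}" unfolding tuples_def by auto
  then show ?thesis using finite_lists_length_eq[OF \<open>finite A\<close>] by simp
qed

lemma map_in_tuples: "xs \<in> tuples A n \<Longrightarrow> h ` A \<subseteq> B \<Longrightarrow> map h xs \<in> tuples B n"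
  unfolding tuples_def by auto

lemma opt_val: "opt s SA SC = Max (val s SA SC ` (dom SA \<rightarrow>\<^sub>E dom SC))"
  unfolding opt_def val_def ..

lemma val_cong:
  assumes "\<And>x. x \<in> dom SA \<Longrightarrow> h x = h' x"
  shows "val s SA SC h = val s SA SC h'"
proof -
  have m: "map h xs = map h' xs" if "xs \<in> tuples (dom SA) n" for xs n
    using that assms by (auto simp: tuples_def intro!: map_cong)
  show ?thesis unfolding val_def
    by (intro sum.cong refl) (simp add: m)
qed

lemma opt_ge:
  assumes "finite (dom SA)" "finite (dom SC)" "h ` dom SA \<subseteq> dom SC"
  shows "val s SA SC h \<le> opt s SA SC"
proof -
  have "val s SA SC h = val s SA SC (restrict h (dom SA))"
    by (rule val_cong) auto
  moreover have "restrict h (dom SA) \<in> dom SA \<rightarrow>\<^sub>E dom SC" using assms(3) by auto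
  ultimately show ?thesis unfolding opt_val
    using assms by (intro Max_ge) (auto intro: finite_PiE)
qed

lemma opt_attained:
  assumes "finite (dom SA)" "finite (dom SC)" "dom SC \<noteq> {}"
  shows "\<exists>h\<in>dom SA \<rightarrow>\<^sub>E dom SC. opt s SA SC = val s SA SC h"
proof -
  have fin: "finite (val s SA SC ` (dom SA \<rightarrow>\<^sub>E dom SC))" using assms by (auto intro: finite_PiE)
  have ne: "val s SA SC ` (dom SA \<rightarrow>\<^sub>E dom SC) \<noteq> {}" using assms(3) by (auto simp: PiE_eq_empty_iff)
  show ?thesis using Max_in[OF fin ne] unfolding opt_val by auto
qed

lemma val_nonneg:
  assumes "is_struct s SA" "is_struct s SC" "h ` dom SA \<subseteq> dom SC"
  shows "0 \<le> val s SA SC h"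
  unfolding val_def
proof (intro sum_nonneg)
  fix f xs assume f: "f \<in> sig_syms s" and xs: "xs \<in> tuples (dom SA) (sig_ar s f)"
  have "map h xs \<in> tuples (dom SC) (sig_ar s f)" using map_in_tuples[OF xs assms(3)] .
  then show "0 \<le> real_of_rat (interp SA f xs) * real_of_rat (interp SC f (map h xs))"
    using assms f xs unfolding is_struct_def by (auto intro!: mult_nonneg_nonneg)
qed

lemma opt_nonneg:
  assumes "is_struct s SA" "is_struct s SC"
  shows "0 \<le> opt s SA SC"
proof -
  obtain c where "c \<in> dom SC" using assms(2) unfolding is_struct_def by auto
  then have "(\<lambda>_. c) ` dom SA \<subseteq> dom SC" by auto
  then show ?thesis using val_nonneg[OF assms] opt_ge[of SA SC "\<lambda>_. c"] assms
    unfolding is_struct_def by (meson order.trans)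
qed

lemma ln_dist_le_lower:
  assumes "ln_dist a b \<le> ereal e" "a > 0" "b \<ge> 0"
  shows "exp (-e) * a \<le> b"
proof -
  have "b \<noteq> 0" using assms unfolding ln_dist_def by auto
  then have b: "b > 0" using assms by auto
  have "\<bar>ln a - ln b\<bar> \<le> e" using assms b unfolding ln_dist_def by auto
  then have "ln a - e \<le> ln b" by linarith
  then have "exp (ln a - e) \<le> exp (ln b)" by simp
  then show ?thesis using assms b by (simp add: exp_diff exp_minus field_simps)
qed

lemma ln_dist_sym: "ln_dist a b = ln_dist b a"
  unfolding ln_dist_def by (auto simp: abs_minus_commute)

lemma ln_dist_le_upper:
  assumes "0 \<le> b" "b \<le> a" "exp (-e) * a \<le> b" "e \<ge> 0"
  shows "ln_dist a b \<le> ereal e"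
proof (cases "a = 0")
  case True
  then show ?thesis using assms unfolding ln_dist_def by auto
next
  case False
  then have a: "a > 0" using assms by auto
  have b: "b > 0" using a assms(3) by (smt (verit) exp_gt_zero mult_pos_pos)
  have "ln (exp (-e) * a) \<le> ln b" using assms(3) a b by (subst ln_le_cancel_iff) auto
  then have "-e + ln a \<le> ln b" using a by (simp add: ln_mult)
  moreover have "ln b \<le> ln a" using assms a b by simp
  ultimately have "\<bar>ln a - ln b\<bar> \<le> e" by linarith
  then show ?thesis using a b unfolding ln_dist_def by auto
qed

lemma d_opt_le:
  assumes "d_opt s SA SB \<le> ereal e" "is_struct s SC"
  shows "ln_dist (opt s SA SC) (opt s SB SC) \<le> ereal e"
proof -
  have "ln_dist (opt s SA SC) (opt s SB SC) \<le> d_opt s SA SB"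
    unfolding d_opt_def by (rule SUP_upper) (use assms in auto)
  then show ?thesis using assms(1) by (rule order.trans)
qed

lemma d_opt_leI:
  assumes "\<And>SC. is_struct s SC \<Longrightarrow> ln_dist (opt s SA SC) (opt s SB SC) \<le> ereal e"
  shows "d_opt s SA SB \<le> ereal e"
  using assms unfolding d_opt_def by (auto intro: SUP_least)



lemma graph_eq: "G = (verts G, edges G)" unfolding verts_def edges_def by simp

lemma verts_pair[simp]: "verts (V, E) = V" and edges_pair[simp]: "edges (V, E) = E"
  unfolding verts_def edges_def by simp_all

lemma gaifman_verts[simp]: "verts (gaifman s S) = dom S"
  unfolding gaifman_def by simp

lemma gaifman_edges: "edges (gaifman s S) = {{u, v} | u v. u \<noteq> v \<and>
      (\<exists>f\<in>sig_syms s. \<exists>xs\<in>tuples (dom S) (sig_ar s f).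
          interp S f xs > 0 \<and> u \<in> set xs \<and> v \<in> set xs)}"
  unfolding gaifman_def by simp

lemma gaifman_wf: "is_struct s S \<Longrightarrow> wf_graph (gaifman s S)"
  unfolding wf_graph_def gaifman_edges is_struct_def by (auto simp: tuples_def)

lemma p_iso:
  assumes "graph_parameter p" "wf_graph H" "wf_graph H'" "graph_iso H H'"
  shows "p H = p H'"
  using assms unfolding graph_parameter_def by blast

lemma p_mono:
  assumes "monotone_param p" "wf_graph G" "subgraph H G"
  shows "p H \<le> p G"
  using assms unfolding monotone_param_def by blast

lemma p_union:
  assumes "max_on_disjoint_union p" "wf_graph G" "wf_graph H" "verts G \<inter> verts H = {}"
  shows "p (graph_union G H) = max (p G) (p H)"
  using assms unfolding max_on_disjoint_union_def by blast

lemma iso_image: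
  assumes "inj_on f (verts H)"
  shows "graph_iso H (f ` verts H, (\<lambda>e. f ` e) ` edges H)"
  using assms unfolding graph_iso_def by (intro exI[of _ f]) (auto simp: inj_on_imp_bij_betw)

lemma p_edgeless:
  assumes gp: "graph_parameter p" and mo: "monotone_param p" and mu: "max_on_disjoint_union p"
    and X: "finite X" and H: "wf_graph H" "verts H \<noteq> {}"
  shows "p (X, {}) \<le> p H"
proof -
  obtain b where b: "b \<in> verts H" using H by auto
  have wfb: "wf_graph ({b}, {})" unfolding wf_graph_def by simp
  have pb: "p ({b}, {}) \<le> p H"
    using p_mono[OF mo H(1)] b wfb unfolding subgraph_def by auto
  have px: "p ({x}, {}) = p ({b}, {})" for x
  proof (rule p_iso[OF gp])
    show "wf_graph ({x}, {})" unfolding wf_graph_def by simp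
    show "wf_graph ({b}, {})" by (rule wfb)
    show "graph_iso ({x}, {}) ({b}, {})" unfolding graph_iso_def
      by (intro exI[of _ "\<lambda>_. b"]) (auto simp: bij_betw_def)
  qed
  from X show ?thesis
  proof (induction X rule: finite_induct)
    case empty
    have "subgraph ({}, {}) ({b}, {})" unfolding subgraph_def wf_graph_def by simp
    then show ?case using p_mono[OF mo wfb] pb by fastforce
  next
    case (insert x X)
    have "graph_union ({x}, {}) (X, {}) = (insert x X, {})"
      unfolding graph_union_def by auto
    moreover have "p (graph_union ({x}, {}) (X, {})) = max (p ({x}, {})) (p (X, {}))"
      by (rule p_union[OF mu]) (use insert in \<open>auto simp: wf_graph_def\<close>)
    moreover have "p ({x}, {}) \<le> p H" using px[of x] pb by simp
    ultimately show ?case using insert by simp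
  qed
qed



definition sigB :: "('v \<Rightarrow> nat) \<Rightarrow> 'v set \<Rightarrow> signature" where
  "sigB idx V = (insert 0 (Suc ` idx ` V), \<lambda>f. if f = 0 then 2 else 1)"

lemma sigB_syms: "sig_syms (sigB idx V) = insert 0 (Suc ` idx ` V)"
  and sigB_ar: "sig_ar (sigB idx V) f = (if f = 0 then 2 else 1)"
  unfolding sigB_def sig_syms_def sig_ar_def by simp_all

lemma tuples_1: "tuples D 1 = (\<lambda>y. [y]) ` D"
  unfolding tuples_def by (auto simp: length_Suc_conv)

lemma tuples_Suc0: "tuples D (Suc 0) = (\<lambda>y. [y]) ` D"
  using tuples_1 by simp

lemma tuples_2: "tuples D 2 = (\<lambda>(u,v). [u,v]) ` (D \<times> D)"
  unfolding tuples_def by (auto simp: length_Suc_conv numeral_2_eq_2)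

lemma val_sigB:
  assumes "inj_on idx V" "finite V"
  shows "val (sigB idx V) X Y h =
    (\<Sum>ys\<in>tuples (dom X) 2. of_rat (interp X 0 ys) * of_rat (interp Y 0 (map h ys))) +
    (\<Sum>x\<in>V. \<Sum>y\<in>dom X. of_rat (interp X (Suc (idx x)) [y]) * of_rat (interp Y (Suc (idx x)) [h y]))"
proof -
  let ?T = "\<lambda>f. \<Sum>xs\<in>tuples (dom X) (sig_ar (sigB idx V) f).
        real_of_rat (interp X f xs) * real_of_rat (interp Y f (map h xs))"
  have inner: "?T (Suc (idx x)) = (\<Sum>y\<in>dom X. of_rat (interp X (Suc (idx x)) [y]) * of_rat (interp Y (Suc (idx x)) [h y]))" for x
  proof -
    have "?T (Suc (idx x)) = (\<Sum>xs\<in>(\<lambda>y. [y]) ` dom X. real_of_rat (interp X (Suc (idx x)) xs) * real_of_rat (interp Y (Suc (idx x)) (map h xs)))"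
      by (simp add: sigB_ar tuples_Suc0)
    also have "\<dots> = (\<Sum>y\<in>dom X. of_rat (interp X (Suc (idx x)) [y]) * of_rat (interp Y (Suc (idx x)) [h y]))" by (subst sum.reindex) (auto simp: inj_on_def)
    finally show ?thesis .
  qed
  have "val (sigB idx V) X Y h = (\<Sum>f\<in>insert 0 (Suc ` idx ` V). ?T f)"
    unfolding val_def sigB_syms ..
  also have "\<dots> = ?T 0 + (\<Sum>f\<in>Suc ` idx ` V. ?T f)"
    using assms by (subst sum.insert) auto
  also have "(\<Sum>f\<in>Suc ` idx ` V. ?T f) = (\<Sum>x\<in>V. ?T (Suc (idx x)))"
  proof -
    have "Suc ` idx ` V = (Suc \<circ> idx) ` V" by auto
    moreover have "inj_on (Suc \<circ> idx) V" using assms(1) by (auto simp: inj_on_def)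
    ultimately show ?thesis using sum.reindex[of "Suc \<circ> idx" V ?T] by simp
  qed
  finally show ?thesis by (simp only: inner) (simp add: sigB_ar)
qed



definition dq :: "'v set set \<Rightarrow> ('v set \<Rightarrow> rat) \<Rightarrow> 'v \<Rightarrow> rat" where
  "dq E w x = (\<Sum>e\<in>E. if x \<in> e then w e else 0)"

definition structA :: "'v set \<Rightarrow> 'v set set \<Rightarrow> ('v set \<Rightarrow> rat) \<Rightarrow> ('v set \<Rightarrow> 'v list) \<Rightarrow> ('v \<Rightarrow> nat) \<Rightarrow> 'v struct" where
  "structA V E w ori idx = (V, \<lambda>f xs. if f = 0 then (\<Sum>e\<in>E. if xs = ori e then w e else 0)
       else (\<Sum>x\<in>V. if f = Suc (idx x) \<and> xs = [x] then dq E w x else 0))"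

lemma dom_pair[simp]: "dom (A, I) = A" and interp_pair[simp]: "interp (A, I) = I"
  unfolding dom_def interp_def by simp_all

context
  fixes V :: "'v set" and E :: "'v set set" and w :: "'v set \<Rightarrow> rat"
    and ori :: "'v set \<Rightarrow> 'v list" and idx :: "'v \<Rightarrow> nat"
  assumes finV: "finite V"
    and Esub: "\<And>e. e \<in> E \<Longrightarrow> e \<subseteq> V \<and> card e = 2"
    and ori: "\<And>e. e \<in> E \<Longrightarrow> \<exists>a b. ori e = [a, b] \<and> e = {a, b} \<and> a \<noteq> b"
    and idx: "inj_on idx V"
    and wpos: "\<And>e. e \<in> E \<Longrightarrow> w e > 0"
begin

lemma finE: "finite E"
proof -
  have "E \<subseteq> Pow V" using Esub by auto
  then show ?thesis using finV by (meson finite_Pow_iff finite_subset)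
qed

lemma ori_set: "e \<in> E \<Longrightarrow> set (ori e) = e"
  using ori by fastforce

lemma ori_tuples: "e \<in> E \<Longrightarrow> ori e \<in> tuples V 2"
  using ori[of e] Esub[of e] unfolding tuples_def by auto

lemma ori_inj: "inj_on ori E"
  by (metis inj_onI ori_set)

lemma dq_nonneg: "0 \<le> dq E w x"
  unfolding dq_def using wpos by (auto intro!: sum_nonneg simp: less_imp_le)

lemma A_dom[simp]: "dom (structA V E w ori idx) = V"
  unfolding structA_def by simp

lemma A_interp0: "interp (structA V E w ori idx) 0 xs = (\<Sum>e\<in>E. if xs = ori e then w e else 0)"
  unfolding structA_def by simp

lemma A_interp0_ori: "e \<in> E \<Longrightarrow> interp (structA V E w ori idx) 0 (ori e) = w e"
proof -
  assume e: "e \<in> E"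
  have "(\<Sum>e'\<in>E. if ori e = ori e' then w e' else 0) = (\<Sum>e'\<in>E. if e' = e then w e' else 0)"
    by (rule sum.cong) (use ori_inj e in \<open>auto simp: inj_on_def\<close>)
  then show ?thesis using e finE by (simp add: A_interp0)
qed

lemma A_interpU: "x \<in> V \<Longrightarrow> y \<in> V \<Longrightarrow>
   interp (structA V E w ori idx) (Suc (idx x)) [y] = (if y = x then dq E w x else 0)"
proof -
  assume x: "x \<in> V" and y: "y \<in> V"
  have "interp (structA V E w ori idx) (Suc (idx x)) [y] = (\<Sum>x'\<in>V. if Suc (idx x) = Suc (idx x') \<and> [y] = [x'] then dq E w x' else 0)"
    unfolding structA_def by simp
  also have "\<dots> = (\<Sum>x'\<in>V. if x' = x then (if y = x then dq E w x else 0) else 0)"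
    by (rule sum.cong) (use idx x y in \<open>auto simp: inj_on_def\<close>)
  also have "\<dots> = (if y = x then dq E w x else 0)" using x finV by simp
  finally show ?thesis .
qed

lemma A_struct:
  assumes "V \<noteq> {}"
  shows "is_struct s (structA V E w ori idx)"
  unfolding is_struct_def structA_def
  using finV assms wpos dq_nonneg by (auto intro!: sum_nonneg simp: less_imp_le)

lemma A_sum0:
  "(\<Sum>ys\<in>tuples V 2. of_rat (interp (structA V E w ori idx) 0 ys) * (\<phi> ys :: real))
     = (\<Sum>e\<in>E. of_rat (w e) * \<phi> (ori e))"
proof -
  have "(\<Sum>ys\<in>tuples V 2. of_rat (interp (structA V E w ori idx) 0 ys) * \<phi> ys)
     = (\<Sum>ys\<in>tuples V 2. \<Sum>e\<in>E. (if ys = ori e then of_rat (w e) * \<phi> ys else 0))"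
    by (simp add: A_interp0 of_rat_sum sum_distrib_right if_distrib if_distribR cong: if_cong)
  also have "\<dots> = (\<Sum>e\<in>E. \<Sum>ys\<in>tuples V 2. (if ys = ori e then of_rat (w e) * \<phi> ys else 0))"
    by (rule sum.swap)
  also have "\<dots> = (\<Sum>e\<in>E. of_rat (w e) * \<phi> (ori e))"
    by (rule sum.cong) (auto simp: ori_tuples finV)
  finally show ?thesis .
qed

lemma A_val:
  assumes "V \<noteq> {}"
  shows "val (sigB idx V) (structA V E w ori idx) C h =
    (\<Sum>e\<in>E. of_rat (w e) * of_rat (interp C 0 (map h (ori e)))) +
    (\<Sum>x\<in>V. of_rat (dq E w x) * of_rat (interp C (Suc (idx x)) [h x]))"
proof -
  have "val (sigB idx V) (structA V E w ori idx) C h =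
    (\<Sum>ys\<in>tuples V 2. of_rat (interp (structA V E w ori idx) 0 ys) * of_rat (interp C 0 (map h ys))) +
    (\<Sum>x\<in>V. \<Sum>y\<in>V. of_rat (interp (structA V E w ori idx) (Suc (idx x)) [y]) * of_rat (interp C (Suc (idx x)) [h y]))"
    using val_sigB[OF idx finV, of "structA V E w ori idx" C h] by (simp add: structA_def[of V])
  also have "(\<Sum>ys\<in>tuples V 2. of_rat (interp (structA V E w ori idx) 0 ys) * (of_rat (interp C 0 (map h ys))::real))
     = (\<Sum>e\<in>E. of_rat (w e) * of_rat (interp C 0 (map h (ori e))))"
    by (rule A_sum0)
  also have "(\<Sum>x\<in>V. \<Sum>y\<in>V. of_rat (interp (structA V E w ori idx) (Suc (idx x)) [y]) * (of_rat (interp C (Suc (idx x)) [h y])::real))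
     = (\<Sum>x\<in>V. of_rat (dq E w x) * of_rat (interp C (Suc (idx x)) [h x]))"
  proof (rule sum.cong[OF refl])
    fix x assume x: "x \<in> V"
    have "(\<Sum>y\<in>V. of_rat (interp (structA V E w ori idx) (Suc (idx x)) [y]) * of_rat (interp C (Suc (idx x)) [h y]))
       = (\<Sum>y\<in>V. if y = x then of_rat (dq E w x) * of_rat (interp C (Suc (idx x)) [h y]) else 0)"
      by (rule sum.cong) (auto simp: A_interpU x)
    also have "\<dots> = of_rat (dq E w x) * of_rat (interp C (Suc (idx x)) [h x])"
      using x finV by simp
    finally show "(\<Sum>y\<in>V. of_rat (interp (structA V E w ori idx) (Suc (idx x)) [y]) * of_rat (interp C (Suc (idx x)) [h y]))
       = of_rat (dq E w x) * of_rat (interp C (Suc (idx x)) [h x])" .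
  qed
  finally show ?thesis .
qed

lemma dq_sum_weighted:
  "(\<Sum>x\<in>V. of_rat (dq E w x) * (if x \<in> X then 1 else 0)) = (\<Sum>e\<in>E. of_rat (w e) * real (card (e \<inter> X)))"
proof -
  have "(\<Sum>x\<in>V. of_rat (dq E w x) * (if x \<in> X then 1 else 0)) = (\<Sum>x\<in>V. \<Sum>e\<in>E. if x \<in> e \<and> x \<in> X then (of_rat (w e)::real) else 0)"
    unfolding dq_def by (auto simp: of_rat_sum sum_distrib_right intro!: sum.cong)
  also have "\<dots> = (\<Sum>e\<in>E. \<Sum>x\<in>V. if x \<in> e \<and> x \<in> X then (of_rat (w e)::real) else 0)"
    by (rule sum.swap)
  also have "\<dots> = (\<Sum>e\<in>E. of_rat (w e) * real (card (e \<inter> X)))"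
  proof (rule sum.cong[OF refl])
    fix e assume e: "e \<in> E"
    have "(\<Sum>x\<in>V. if x \<in> e \<and> x \<in> X then (of_rat (w e)::real) else 0) = (\<Sum>x\<in>{x\<in>V. x \<in> e \<and> x \<in> X}. of_rat (w e))"
      by (rule sum.inter_filter[symmetric, OF finV])
    also have "{x\<in>V. x \<in> e \<and> x \<in> X} = e \<inter> X" using Esub[OF e] by auto
    finally show "(\<Sum>x\<in>V. if x \<in> e \<and> x \<in> X then (of_rat (w e)::real) else 0) = of_rat (w e) * real (card (e \<inter> X))"
      by simp
  qed
  finally show ?thesis .
qed

lemma dq_sum: "(\<Sum>x\<in>V. of_rat (dq E w x)) = 2 * (\<Sum>e\<in>E. (of_rat (w e) :: real))"
proof -
  have "(\<Sum>x\<in>V. of_rat (dq E w x)) = (\<Sum>x\<in>V. of_rat (dq E w x) * (if x \<in> V then 1 else 0))"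
    by (rule sum.cong) auto
  also have "\<dots> = (\<Sum>e\<in>E. of_rat (w e) * real (card (e \<inter> V)))" by (rule dq_sum_weighted)
  also have "\<dots> = (\<Sum>e\<in>E. 2 * of_rat (w e))"
    by (rule sum.cong) (use Esub in \<open>auto simp: Int_absorb2\<close>)
  finally show ?thesis by (simp add: sum_distrib_left)
qed

lemma dq_sum_touch:
  "(\<Sum>e\<in>E. of_rat (w e) * (if e \<inter> X \<noteq> {} then 1 else 0)) \<le> (\<Sum>x\<in>V. (of_rat (dq E w x)::real) * (if x \<in> X then 1 else 0))"
  unfolding dq_sum_weighted
proof (rule sum_mono)
  fix e assume e: "e \<in> E"
  have "finite e" using Esub[OF e] finV finite_subset by blast
  then have "e \<inter> X \<noteq> {} \<Longrightarrow> 1 \<le> card (e \<inter> X)" by (simp add: Suc_le_eq card_gt_0_iff)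
  then show "of_rat (w e) * (if e \<inter> X \<noteq> {} then 1 else 0) \<le> (of_rat (w e)::real) * real (card (e \<inter> X))"
    using wpos[OF e] by (auto intro!: mult_left_mono)
qed

lemma A_gaifman:
  assumes "V \<noteq> {}"
  shows "gaifman (sigB idx V) (structA V E w ori idx) = (V, E)"
proof -
  let ?A = "structA V E w ori idx"
  have "edges (gaifman (sigB idx V) ?A) = E"
  proof
    show "edges (gaifman (sigB idx V) ?A) \<subseteq> E"
    proof
      fix e assume "e \<in> edges (gaifman (sigB idx V) ?A)"
      then obtain u v f xs where e: "e = {u, v}" "u \<noteq> v" "f \<in> sig_syms (sigB idx V)"
        "xs \<in> tuples V (sig_ar (sigB idx V) f)" "interp ?A f xs > 0" "u \<in> set xs" "v \<in> set xs"
        unfolding gaifman_edges A_dom by blast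
      show "e \<in> E"
      proof (cases "f = 0")
        case True
        then have pos: "(\<Sum>e\<in>E. if xs = ori e then w e else 0) > 0" using e by (simp add: A_interp0)
        have "\<exists>e'\<in>E. xs = ori e'"
        proof (rule ccontr)
          assume "\<not> (\<exists>e'\<in>E. xs = ori e')"
          then have "(\<Sum>e\<in>E. if xs = ori e then w e else 0) = 0" by (intro sum.neutral) auto
          with pos show False by simp
        qed
        then obtain e' where e': "e' \<in> E" "xs = ori e'" by blast
        then have "u \<in> e'" "v \<in> e'" using e ori_set by auto
        moreover have "card e' = 2" using Esub e' by auto
        ultimately obtain a b where "e' = {a, b}" by (meson card_2_iff)
        with \<open>u \<in> e'\<close> \<open>v \<in> e'\<close> e(2) have "e' = {u, v}" by auto
        then show ?thesis using e e' by simp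
      next
        case False
        then have "xs \<in> tuples V 1" using e by (simp add: sigB_ar)
        then obtain y where "xs = [y]" by (auto simp: tuples_Suc0)
        then show ?thesis using e by auto
      qed
    qed
  next
    show "E \<subseteq> edges (gaifman (sigB idx V) ?A)"
    proof
      fix e assume e: "e \<in> E"
      obtain a b where ab: "ori e = [a, b]" "e = {a, b}" "a \<noteq> b" using ori[OF e] by auto
      have i: "interp ?A 0 (ori e) > 0" using A_interp0_ori[OF e] wpos[OF e] by simp
      have t: "ori e \<in> tuples V (sig_ar (sigB idx V) 0)" using ori_tuples[OF e] by (simp add: sigB_ar)
      have z: "(0::nat) \<in> sig_syms (sigB idx V)" by (simp add: sigB_syms)
      have ms: "a \<in> set (ori e)" "b \<in> set (ori e)" using ab by auto
      show "e \<in> edges (gaifman (sigB idx V) ?A)"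
        unfolding gaifman_edges A_dom
        apply (rule CollectI, rule exI[of _ a], rule exI[of _ b])
        apply (intro conjI bexI[OF _ z] bexI[OF _ t])
        using ab(2,3) i ms by auto
    qed
  qed
  then show ?thesis using graph_eq[of "gaifman (sigB idx V) ?A"] by (simp add: structA_def)
qed

end



lemma gaifman_edgeI:
  assumes "f \<in> sig_syms s" "xs \<in> tuples (dom S) (sig_ar s f)" "interp S f xs > 0"
    "u \<in> set xs" "v \<in> set xs" "u \<noteq> v"
  shows "{u, v} \<in> edges (gaifman s S)"
  unfolding gaifman_edges
  apply (rule CollectI, rule exI[of _ u], rule exI[of _ v])
  apply (intro conjI bexI[OF _ assms(1)] bexI[OF _ assms(2)])
  using assms by auto

lemma per_weight:
  fixes p :: "'v graph \<Rightarrow> nat" and G :: "'v graph" and w :: "'v set \<Rightarrow> rat"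
  assumes gp: "graph_parameter p" and mo: "monotone_param p" and mu: "max_on_disjoint_union p"
    and wfG: "wf_graph G" and GG: "G \<in> \<G>" and r: "r \<ge> 2" and eps: "eps > 0"
    and HB: "\<And>s A. (s, A) \<in> struct_class \<G> r \<Longrightarrow> \<exists>B. is_struct s B \<and> p (gaifman s B) \<le> k \<and> d_opt s A B \<le> ereal eps"
    and wpos: "\<And>e. e \<in> edges G \<Longrightarrow> w e > 0"
    and wsum: "(\<Sum>e\<in>edges G. (of_rat (w e)::real)) = 1"
  shows "\<exists>F\<subseteq>edges G. p (delete_edges G F) \<le> k \<and> (\<Sum>e\<in>F. (of_rat (w e)::real)) \<le> 3 * (1 - exp (-2*eps))"
proof -
  define V where "V = verts G"
  define E where "E = edges G"
  have finV: "finite V" and Esub: "\<And>e. e \<in> E \<Longrightarrow> e \<subseteq> V \<and> card e = 2"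
    using wfG unfolding wf_graph_def V_def E_def by auto
  have Gpair: "G = (V, E)" unfolding V_def E_def by (rule graph_eq)
  have wposE: "\<And>e. e \<in> E \<Longrightarrow> w e > 0" using wpos E_def by simp
  have wsumE: "(\<Sum>e\<in>E. (of_rat (w e)::real)) = 1" using wsum E_def by simp
  have Ene: "E \<noteq> {}" using wsumE by auto
  then obtain e0 where e0: "e0 \<in> E" by auto
  have Vne: "V \<noteq> {}" using Esub[OF e0] by (metis card.empty subset_empty zero_neq_numeral)
  obtain idx :: "'v \<Rightarrow> nat" where idx: "inj_on idx V" using finite_imp_inj_to_nat_seg[OF finV] by blast
  have "\<forall>e\<in>E. \<exists>l. \<exists>a b. l = [a, b] \<and> e = {a, b} \<and> a \<noteq> b"
  proof
    fix e assume "e \<in> E"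
    then have "card e = 2" using Esub by blast
    then obtain a b where "e = {a, b}" "a \<noteq> b" unfolding card_2_iff by blast
    then show "\<exists>l. \<exists>a b. l = [a, b] \<and> e = {a, b} \<and> a \<noteq> b" by blast
  qed
  then have "\<exists>ori. \<forall>e\<in>E. \<exists>a b. ori e = [a, b] \<and> e = {a, b} \<and> a \<noteq> b" by (rule bchoice)
  then obtain ori where ori0: "\<forall>e\<in>E. \<exists>a b. ori e = [a, b] \<and> e = {a, b} \<and> a \<noteq> b" by (elim exE)
  have ori: "\<exists>a b. ori e = [a, b] \<and> e = {a, b} \<and> a \<noteq> b" if "e \<in> E" for e
    using ori0 that by (rule bspec)
  note ctx = finV Esub ori idx wposE
  define s where "s = sigB idx V"
  define A where "A = structA V E w ori idx"
  have Astruct: "is_struct s A" unfolding A_def using A_struct[OF ctx Vne] .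
  have Agaif: "gaifman s A = G" unfolding s_def A_def using A_gaifman[OF ctx Vne] Gpair by simp
  have sig: "is_sig s" unfolding is_sig_def s_def sigB_syms using finV by simp
  have ar: "\<forall>f\<in>sig_syms s. sig_ar s f \<le> r" using r by (simp add: s_def sigB_ar)
  have "(s, A) \<in> struct_class \<G> r" unfolding struct_class_def using sig Astruct ar Agaif GG by auto
  then obtain B where B: "is_struct s B" "p (gaifman s B) \<le> k" "d_opt s A B \<le> ereal eps"
    using HB by blast
  have finB: "finite (dom B)" and neB: "dom B \<noteq> {}" using B unfolding is_struct_def by auto
  have zsym: "(0::nat) \<in> sig_syms s" by (simp add: s_def sigB_syms)
  have ar0: "sig_ar s 0 = 2" by (simp add: s_def sigB_ar)
  have B0nn: "0 \<le> interp B 0 ys" if "ys \<in> tuples (dom B) 2" for ys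
    using B(1) zsym that ar0 unfolding is_struct_def by auto
  have dA: "dom A = V" unfolding A_def by (simp add: structA_def)
  have val_A: "val s A C h' =
    (\<Sum>e\<in>E. of_rat (w e) * of_rat (interp C 0 (map h' (ori e)))) +
    (\<Sum>x\<in>V. of_rat (dq E w x) * of_rat (interp C (Suc (idx x)) [h' x]))" for C h'
    unfolding s_def A_def by (rule A_val[OF ctx Vne])
  have val_B: "val s B C h' =
    (\<Sum>ys\<in>tuples (dom B) 2. of_rat (interp B 0 ys) * of_rat (interp C 0 (map h' ys))) +
    (\<Sum>x\<in>V. \<Sum>y\<in>dom B. of_rat (interp B (Suc (idx x)) [y]) * of_rat (interp C (Suc (idx x)) [h' y]))" for C h'
    unfolding s_def by (rule val_sigB[OF idx finV])
  define NL where "NL = (\<Sum>ys\<in>tuples (dom B) 2. of_rat (interp B 0 ys) * (if interp B 0 ys > 0 \<and> ys!0 \<noteq> ys!1 then 1 else (0::real)))"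

  define C1 :: "'v struct" where "C1 = (V, \<lambda>f xs. if f = 0 \<and> set xs \<in> E then 1 else 0)"
  have C1s: "is_struct s C1" unfolding is_struct_def C1_def using finV Vne by auto
  have "val s A C1 id = (\<Sum>e\<in>E. of_rat (w e))"
  proof -
    have "(\<Sum>e\<in>E. of_rat (w e) * of_rat (interp C1 0 (map id (ori e)))) = (\<Sum>e\<in>E. (of_rat (w e)::real))"
      by (rule sum.cong) (auto simp: C1_def ori_set[OF ctx])
    moreover have "(\<Sum>x\<in>V. of_rat (dq E w x) * (of_rat (interp C1 (Suc (idx x)) [id x])::real)) = 0"
      by (simp add: C1_def)
    ultimately show ?thesis unfolding val_A by simp
  qed
  then have vAC1: "val s A C1 id = 1" using wsumE by simp
  have oAC1: "1 \<le> opt s A C1"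
    using opt_ge[of A C1 id s] vAC1 finV by (simp add: dA C1_def)
  obtain g1 where g1: "g1 \<in> dom B \<rightarrow>\<^sub>E V" "opt s B C1 = val s B C1 g1"
    using opt_attained[of B C1 s] finB finV Vne by (auto simp: C1_def)
  have "val s B C1 g1 \<le> NL"
  proof -
    have "(\<Sum>x\<in>V. \<Sum>y\<in>dom B. of_rat (interp B (Suc (idx x)) [y]) * (of_rat (interp C1 (Suc (idx x)) [g1 y])::real)) = 0"
      by (simp add: C1_def)
    moreover have "(\<Sum>ys\<in>tuples (dom B) 2. of_rat (interp B 0 ys) * of_rat (interp C1 0 (map g1 ys))) \<le> NL"
      unfolding NL_def
    proof (rule sum_mono)
      fix ys assume ys: "ys \<in> tuples (dom B) 2"
      then obtain a b where ab: "ys = [a, b]" by (auto simp: tuples_2)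
      have nn: "0 \<le> interp B 0 ys" using B0nn ys .
      show "of_rat (interp B 0 ys) * of_rat (interp C1 0 (map g1 ys))
         \<le> of_rat (interp B 0 ys) * (if interp B 0 ys > 0 \<and> ys!0 \<noteq> ys!1 then 1 else (0::real))"
      proof (cases "{g1 a, g1 b} \<in> E")
        case True
        then have "card {g1 a, g1 b} = 2" using Esub by auto
        then have "a \<noteq> b" by auto
        then show ?thesis using True ab nn by (auto simp: C1_def)
      next
        case False
        then show ?thesis using ab nn by (auto simp: C1_def)
      qed
    qed
    ultimately show ?thesis unfolding val_B by simp
  qed
  moreover have "exp (-eps) * opt s A C1 \<le> opt s B C1"
    using ln_dist_le_lower[OF d_opt_le[OF B(3) C1s]] oAC1 opt_nonneg[OF B(1) C1s] by simp
  moreover have "exp (-eps) \<le> exp (-eps) * opt s A C1" using oAC1 by simp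
  ultimately have NL1: "exp (-eps) \<le> NL" using g1 by linarith

  define C2 :: "'v struct" where "C2 = (V, \<lambda>f xs. if f \<noteq> 0 \<and> xs \<noteq> [] \<and> f = Suc (idx (hd xs)) then 1 else 0)"
  have C2s: "is_struct s C2" unfolding is_struct_def C2_def using finV Vne by auto
  have "val s A C2 id = (\<Sum>x\<in>V. of_rat (dq E w x))"
  proof -
    have "(\<Sum>e\<in>E. of_rat (w e) * (of_rat (interp C2 0 (map id (ori e)))::real)) = 0"
      by (simp add: C2_def)
    moreover have "(\<Sum>x\<in>V. of_rat (dq E w x) * (of_rat (interp C2 (Suc (idx x)) [id x])::real)) = (\<Sum>x\<in>V. of_rat (dq E w x))"
      by (simp add: C2_def)
    ultimately show ?thesis unfolding val_A by simp
  qed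
  then have vAC2: "val s A C2 id = 2" using dq_sum[OF ctx] wsumE by simp
  have oAC2: "2 \<le> opt s A C2"
    using opt_ge[of A C2 id s] vAC2 finV by (simp add: dA C2_def)
  obtain g where g: "g \<in> dom B \<rightarrow>\<^sub>E V" "opt s B C2 = val s B C2 g"
    using opt_attained[of B C2 s] finB finV Vne by (auto simp: C2_def)
  have gV: "g y \<in> V" if "y \<in> dom B" for y using g(1) that by auto
  define PU where "PU = (\<Sum>x\<in>V. \<Sum>y\<in>dom B. of_rat (interp B (Suc (idx x)) [y]) * (if g y = x then 1 else (0::real)))"
  have "val s B C2 g = PU"
  proof -
    have "(\<Sum>ys\<in>tuples (dom B) 2. of_rat (interp B 0 ys) * (of_rat (interp C2 0 (map g ys))::real)) = 0"
      by (simp add: C2_def)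
    moreover have "(\<Sum>x\<in>V. \<Sum>y\<in>dom B. of_rat (interp B (Suc (idx x)) [y]) * (of_rat (interp C2 (Suc (idx x)) [g y])::real)) = PU"
      unfolding PU_def
    proof (intro sum.cong refl)
      fix x y assume x: "x \<in> V" and y: "y \<in> dom B"
      have "(idx x = idx (g y)) = (g y = x)" using idx x gV[OF y] unfolding inj_on_def by metis
      then show "of_rat (interp B (Suc (idx x)) [y]) * (of_rat (interp C2 (Suc (idx x)) [g y])::real)
         = of_rat (interp B (Suc (idx x)) [y]) * (if g y = x then 1 else 0)"
        by (simp add: C2_def)
    qed
    ultimately show ?thesis unfolding val_B by simp
  qed
  moreover have "exp (-eps) * opt s A C2 \<le> opt s B C2"
    using ln_dist_le_lower[OF d_opt_le[OF B(3) C2s]] oAC2 opt_nonneg[OF B(1) C2s] by simp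
  moreover have "2 * exp (-eps) \<le> exp (-eps) * opt s A C2" using oAC2 by simp
  ultimately have PU2: "2 * exp (-eps) \<le> PU" using g by linarith

  define C3 :: "'v struct" where "C3 = (dom B, \<lambda>f xs. if f = 0 then (if interp B 0 xs > 0 \<and> xs!0 \<noteq> xs!1 then 1 else 0)
      else if xs \<noteq> [] \<and> f = Suc (idx (g (hd xs))) then 1 else 0)"
  have C3s: "is_struct s C3" unfolding is_struct_def C3_def using finB neB by auto
  have "val s B C3 id = NL + PU"
  proof -
    have "(\<Sum>ys\<in>tuples (dom B) 2. of_rat (interp B 0 ys) * (of_rat (interp C3 0 (map id ys))::real)) = NL"
      unfolding NL_def by (intro sum.cong refl) (simp add: C3_def)
    moreover have "(\<Sum>x\<in>V. \<Sum>y\<in>dom B. of_rat (interp B (Suc (idx x)) [y]) * (of_rat (interp C3 (Suc (idx x)) [id y])::real)) = PU"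
      unfolding PU_def
    proof (intro sum.cong refl)
      fix x y assume x: "x \<in> V" and y: "y \<in> dom B"
      have "(idx x = idx (g y)) = (g y = x)" using idx x gV[OF y] unfolding inj_on_def by metis
      then show "of_rat (interp B (Suc (idx x)) [y]) * (of_rat (interp C3 (Suc (idx x)) [id y])::real)
         = of_rat (interp B (Suc (idx x)) [y]) * (if g y = x then 1 else 0)"
        by (simp add: C3_def)
    qed
    ultimately show ?thesis unfolding val_B by simp
  qed
  then have oBC3: "3 * exp (-eps) \<le> opt s B C3"
    using opt_ge[of B C3 id s] finB NL1 PU2 by (simp add: C3_def)
  obtain h where h: "h \<in> V \<rightarrow>\<^sub>E dom B" "opt s A C3 = val s A C3 h"
    using opt_attained[of A C3 s] finB finV neB by (auto simp: C3_def dA)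
  have hB: "h x \<in> dom B" if "x \<in> V" for x using h(1) that by auto
  have "ln_dist (opt s B C3) (opt s A C3) \<le> ereal eps"
    using d_opt_le[OF B(3) C3s] by (simp add: ln_dist_sym)
  moreover have "0 < opt s B C3" using oBC3 by (smt (verit) exp_gt_zero)
  ultimately have "exp (-eps) * opt s B C3 \<le> opt s A C3"
    using ln_dist_le_lower opt_nonneg[OF Astruct C3s] by blast
  moreover have "exp (-eps) * (3 * exp (-eps)) \<le> exp (-eps) * opt s B C3"
    using oBC3 by simp
  moreover have "exp (-eps) * (3 * exp (-eps)) = 3 * exp (-2 * eps)"
    by (simp add: mult_exp_exp)
  ultimately have vAC3: "3 * exp (-2 * eps) \<le> val s A C3 h" using h by linarith

  define P where "P e = (if interp B 0 (map h (ori e)) > 0 \<and> (map h (ori e))!0 \<noteq> (map h (ori e))!1 then 1 else (0::real))" for e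
  define X where "X = {x\<in>V. g (h x) \<noteq> x}"
  have vAC3': "val s A C3 h = (\<Sum>e\<in>E. of_rat (w e) * P e) + (\<Sum>x\<in>V. of_rat (dq E w x) * (if x \<in> X then 0 else 1))"
  proof -
    have "(\<Sum>e\<in>E. of_rat (w e) * (of_rat (interp C3 0 (map h (ori e)))::real)) = (\<Sum>e\<in>E. of_rat (w e) * P e)"
      unfolding P_def by (intro sum.cong refl) (simp add: C3_def)
    moreover have "(\<Sum>x\<in>V. of_rat (dq E w x) * (of_rat (interp C3 (Suc (idx x)) [h x])::real)) = (\<Sum>x\<in>V. of_rat (dq E w x) * (if x \<in> X then 0 else 1))"
    proof (intro sum.cong refl)
      fix x assume x: "x \<in> V"
      have "(idx x = idx (g (h x))) = (g (h x) = x)" using idx x gV[OF hB[OF x]] unfolding inj_on_def by metis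
      then show "of_rat (dq E w x) * (of_rat (interp C3 (Suc (idx x)) [h x])::real) = of_rat (dq E w x) * (if x \<in> X then 0 else 1)"
        using x by (auto simp: C3_def X_def)
    qed
    ultimately show ?thesis unfolding val_A by simp
  qed
  define F where "F = {e\<in>E. e \<inter> X \<noteq> {} \<or> h ` e \<notin> edges (gaifman s B)}"
  have FE: "F \<subseteq> E" unfolding F_def by auto
  have Ppres: "h ` e \<in> edges (gaifman s B)" if e: "e \<in> E" and Pe: "P e \<noteq> 0" for e
  proof -
    obtain a b where ab: "ori e = [a, b]" "e = {a, b}" "a \<noteq> b" using ori[OF e] by auto
    have abV: "a \<in> V" "b \<in> V" using Esub[OF e] ab by auto
    have pos: "interp B 0 [h a, h b] > 0" "h a \<noteq> h b" using Pe ab unfolding P_def by (auto split: if_splits)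
    have t: "[h a, h b] \<in> tuples (dom B) (sig_ar s 0)" using hB abV ar0 by (auto simp: tuples_def)
    have "{h a, h b} \<in> edges (gaifman s B)"
      by (rule gaifman_edgeI[OF zsym t pos(1)]) (use pos in auto)
    then show ?thesis using ab by simp
  qed
  have P01: "P e = 0 \<or> P e = 1" for e unfolding P_def by auto
  have wnn: "0 \<le> (of_rat (w e)::real)" if "e \<in> E" for e using wposE[OF that] by simp
  define touch where "touch e = (if e \<inter> X \<noteq> {} then 1 else (0::real))" for e
  have "(\<Sum>e\<in>F. (of_rat (w e)::real)) = (\<Sum>e\<in>E. of_rat (w e) * (if e \<in> F then 1 else 0))"
  proof -
    have "(\<Sum>e\<in>F. (of_rat (w e)::real)) = (\<Sum>e\<in>{e\<in>E. e \<in> F}. of_rat (w e))"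
    proof -
      have "{e\<in>E. e \<in> F} = F" using FE by auto
      then show ?thesis by simp
    qed
    also have "\<dots> = (\<Sum>e\<in>E. if e \<in> F then of_rat (w e) else 0)"
      by (rule sum.inter_filter[OF finE[OF ctx]])
    finally show ?thesis by (simp add: if_distrib cong: if_cong)
  qed
  also have "\<dots> \<le> (\<Sum>e\<in>E. of_rat (w e) * ((1 - P e) + touch e))"
  proof (rule sum_mono)
    fix e assume e: "e \<in> E"
    have "(if e \<in> F then 1 else 0) \<le> (1 - P e) + touch e"
    proof (cases "e \<in> F")
      case True
      then have "touch e = 1 \<or> P e = 0" using Ppres[OF e] unfolding F_def touch_def by auto
      then show ?thesis using True P01[of e] unfolding touch_def by auto
    next
      case False
      then show ?thesis using P01[of e] unfolding touch_def by auto
    qed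
    then show "of_rat (w e) * (if e \<in> F then 1 else 0) \<le> of_rat (w e) * ((1 - P e) + touch e)"
      using wnn[OF e] by (rule mult_left_mono)
  qed
  also have "\<dots> = (\<Sum>e\<in>E. of_rat (w e)) - (\<Sum>e\<in>E. of_rat (w e) * P e) + (\<Sum>e\<in>E. of_rat (w e) * touch e)"
    by (simp add: algebra_simps sum.distrib sum_subtractf)
  also have "(\<Sum>e\<in>E. of_rat (w e) * touch e) \<le> (\<Sum>x\<in>V. of_rat (dq E w x) * (if x \<in> X then 1 else 0))"
    unfolding touch_def by (rule dq_sum_touch[OF ctx])
  also have "(\<Sum>x\<in>V. of_rat (dq E w x) * (if x \<in> X then 1 else 0)) = (\<Sum>x\<in>V. of_rat (dq E w x)) - (\<Sum>x\<in>V. of_rat (dq E w x) * (if x \<in> X then 0 else (1::real)))"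
    by (simp add: sum_subtractf[symmetric] algebra_simps if_distrib cong: if_cong)
  finally have wF: "(\<Sum>e\<in>F. (of_rat (w e)::real)) \<le> 3 - val s A C3 h"
    using vAC3' dq_sum[OF ctx] wsumE by simp
  have wF': "(\<Sum>e\<in>F. (of_rat (w e)::real)) \<le> 3 * (1 - exp (-2*eps))"
    using wF vAC3 by simp

  have XV: "X \<subseteq> V" unfolding X_def by auto
  have finX: "finite X" using XV finV finite_subset by blast
  define H1 where "H1 = (V - X, E - F)"
  define I where "I = (X, {}::'v set set)"
  have del: "delete_edges G F = graph_union H1 I"
    unfolding delete_edges_def graph_union_def H1_def I_def V_def[symmetric] E_def[symmetric]
    using XV by auto
  have eVX: "e \<subseteq> V - X" if "e \<in> E - F" for e using that Esub unfolding F_def by auto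
  have wfH1: "wf_graph H1" unfolding wf_graph_def H1_def using finV eVX Esub by auto
  have wfI: "wf_graph I" unfolding wf_graph_def I_def using finX by auto
  have pU: "p (graph_union H1 I) = max (p H1) (p I)"
    by (rule p_union[OF mu wfH1 wfI]) (auto simp: H1_def I_def)
  have wfGB: "wf_graph (gaifman s B)" by (rule gaifman_wf[OF B(1)])
  have pI: "p I \<le> p (gaifman s B)"
    unfolding I_def by (rule p_edgeless[OF gp mo mu finX wfGB]) (use neB in simp)
  have injh: "inj_on h (V - X)"
  proof (rule inj_onI)
    fix x y assume "x \<in> V - X" "y \<in> V - X" "h x = h y"
    then show "x = y" unfolding X_def by (metis (mono_tags, lifting) DiffE mem_Collect_eq)
  qed
  define H1' where "H1' = (h ` (V - X), (\<lambda>e. h ` e) ` (E - F))"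
  have iso: "graph_iso H1 H1'"
    using iso_image[of h H1] injh unfolding H1_def H1'_def by simp
  have gaifE: "h ` e \<in> edges (gaifman s B)" if "e \<in> E - F" for e using that unfolding F_def by auto
  have card2: "card e' = 2" if "e' \<in> edges (gaifman s B)" for e'
    using wfGB that unfolding wf_graph_def by auto
  have wfH1': "wf_graph H1'" unfolding wf_graph_def H1'_def
    using finV eVX gaifE card2 by (auto simp: image_mono)
  have sub: "subgraph H1' (gaifman s B)"
    unfolding subgraph_def using wfH1' hB gaifE by (auto simp: H1'_def)
  have "p H1 = p H1'" by (rule p_iso[OF gp wfH1 wfH1' iso])
  also have "\<dots> \<le> p (gaifman s B)" by (rule p_mono[OF mo wfGB sub])
  finally have "p (delete_edges G F) \<le> k" using del pU pI B(2) by simp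
  then show ?thesis using FE wF' E_def by blast
qed



definition cnt :: "'a set list \<Rightarrow> 'a \<Rightarrow> nat" where "cnt L e = length (filter (\<lambda>F. e \<in> F) L)"
definition phi :: "'a set \<Rightarrow> 'a set list \<Rightarrow> nat" where "phi E L = (\<Sum>e\<in>E. 2 ^ cnt L e)"
definition wt :: "'a set \<Rightarrow> 'a set list \<Rightarrow> 'a \<Rightarrow> rat" where
  "wt E L e = of_nat (2 ^ cnt L e) / of_nat (phi E L)"

lemma phi_pos: "finite E \<Longrightarrow> E \<noteq> {} \<Longrightarrow> phi E L > 0"
  unfolding phi_def by (simp add: sum_pos)

lemma wt_pos: "finite E \<Longrightarrow> E \<noteq> {} \<Longrightarrow> wt E L e > 0"
  unfolding wt_def using phi_pos[of E L] by simp

lemma wt_real: "(of_rat (wt E L e) :: real) = 2 ^ cnt L e / real (phi E L)"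
  unfolding wt_def by (simp add: of_rat_divide of_rat_power)

lemma wt_sum: "finite E \<Longrightarrow> E \<noteq> {} \<Longrightarrow> (\<Sum>e\<in>E. (of_rat (wt E L e) :: real)) = 1"
proof -
  assume fin: "finite E" and ne: "E \<noteq> {}"
  have "(\<Sum>e\<in>E. (of_rat (wt E L e) :: real)) = (\<Sum>e\<in>E. 2 ^ cnt L e) / real (phi E L)"
    unfolding wt_real by (simp add: sum_divide_distrib)
  also have "(\<Sum>e\<in>E. 2 ^ cnt L e) = real (phi E L)" unfolding phi_def by simp
  finally show ?thesis using phi_pos[OF fin ne, of L] by simp
qed

lemma cnt_snoc: "cnt (L @ [F]) e = cnt L e + (if e \<in> F then 1 else 0)"
  unfolding cnt_def by simp

lemma cnt_Nil: "cnt [] e = 0" unfolding cnt_def by simp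

lemma phi_snoc:
  assumes fin: "finite E" and ne: "E \<noteq> {}" and FE: "F \<subseteq> E"
  shows "real (phi E (L @ [F])) = real (phi E L) * (1 + (\<Sum>e\<in>F. of_rat (wt E L e)))"
proof -
  have "real (phi E (L @ [F])) = (\<Sum>e\<in>E. 2 ^ cnt L e + (if e \<in> F then 2 ^ cnt L e else 0))"
    unfolding phi_def cnt_snoc by (auto intro!: sum.cong)
  also have "\<dots> = real (phi E L) + (\<Sum>e\<in>E. if e \<in> F then 2 ^ cnt L e else 0)"
    unfolding phi_def by (simp add: sum.distrib)
  also have "(\<Sum>e\<in>E. if e \<in> F then (2::real) ^ cnt L e else 0) = (\<Sum>e\<in>{e\<in>E. e \<in> F}. 2 ^ cnt L e)"
    by (rule sum.inter_filter[symmetric, OF fin])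
  also have "{e\<in>E. e \<in> F} = F" using FE by auto
  also have "(\<Sum>e\<in>F. (2::real) ^ cnt L e) = real (phi E L) * (\<Sum>e\<in>F. of_rat (wt E L e))"
    unfolding wt_real using phi_pos[OF fin ne, of L] by (simp add: sum_divide_distrib[symmetric])
  finally show ?thesis by (simp add: algebra_simps)
qed

lemma ln2_ge_half: "1/2 \<le> ln (2::real)"
  using ln_diff_le[of 1 2] by simp

lemma mwu:
  fixes E :: "'a set" and good :: "'a set \<Rightarrow> bool" and \<delta> :: real
  assumes fin: "finite E" and ne: "E \<noteq> {}" and dpos: "\<delta> > 0"
    and H: "\<And>w::'a \<Rightarrow> rat. (\<And>e. e \<in> E \<Longrightarrow> w e > 0) \<Longrightarrow> (\<Sum>e\<in>E. (of_rat (w e)::real)) = 1 \<Longrightarrow>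
              \<exists>F\<subseteq>E. good F \<and> (\<Sum>e\<in>F. (of_rat (w e)::real)) \<le> \<delta>"
  shows "\<exists>\<pi>::'a set pmf. (\<forall>F\<in>set_pmf \<pi>. F \<subseteq> E \<and> good F) \<and>
            (\<forall>e\<in>E. measure_pmf.prob \<pi> {F. e \<in> F} \<le> 4 * \<delta>)"
proof -
  define ch where "ch L = (SOME F. F \<subseteq> E \<and> good F \<and> (\<Sum>e\<in>F. (of_rat (wt E L e)::real)) \<le> \<delta>)" for L
  have chP: "ch L \<subseteq> E \<and> good (ch L) \<and> (\<Sum>e\<in>ch L. (of_rat (wt E L e)::real)) \<le> \<delta>" for L
  proof -
    have "\<exists>F\<subseteq>E. good F \<and> (\<Sum>e\<in>F. (of_rat (wt E L e)::real)) \<le> \<delta>"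
      by (rule H) (use wt_pos[OF fin ne] wt_sum[OF fin ne] in auto)
    then have "\<exists>F. F \<subseteq> E \<and> good F \<and> (\<Sum>e\<in>F. (of_rat (wt E L e)::real)) \<le> \<delta>" by blast
    then show ?thesis unfolding ch_def by (rule someI_ex)
  qed
  define hist where "hist t = rec_nat [] (\<lambda>_ L. L @ [ch L]) t" for t
  have hist0: "hist 0 = []" unfolding hist_def by simp
  have histS: "hist (Suc t) = hist t @ [ch (hist t)]" for t unfolding hist_def by simp
  have len: "length (hist t) = t" for t by (induction t) (auto simp: hist0 histS)
  have histP: "\<forall>F\<in>set (hist t). F \<subseteq> E \<and> good F" for t
    by (induction t) (use chP in \<open>auto simp: hist0 histS\<close>)
  have phib: "real (phi E (hist t)) \<le> real (card E) * (1 + \<delta>) ^ t" for t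
  proof (induction t)
    case 0
    then show ?case by (simp add: hist0 phi_def cnt_Nil)
  next
    case (Suc t)
    have "real (phi E (hist (Suc t))) = real (phi E (hist t)) * (1 + (\<Sum>e\<in>ch (hist t). of_rat (wt E (hist t) e)))"
      unfolding histS by (rule phi_snoc[OF fin ne]) (use chP in blast)
    also have "\<dots> \<le> real (phi E (hist t)) * (1 + \<delta>)"
      using chP[of "hist t"] by (intro mult_left_mono) auto
    also have "\<dots> \<le> real (card E) * (1 + \<delta>) ^ t * (1 + \<delta>)"
      using Suc dpos by (intro mult_right_mono) auto
    finally show ?case by (simp add: algebra_simps)
  qed
  define m where "m = card E"
  have m1: "1 \<le> m" using fin ne unfolding m_def by (simp add: Suc_le_eq card_gt_0_iff)
  define T where "T = nat \<lceil>ln (real m) / \<delta>\<rceil> + 1"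
  have T1: "1 \<le> T" unfolding T_def by simp
  have lnm: "ln (real m) \<le> real T * \<delta>"
  proof -
    have "ln (real m) / \<delta> \<le> real (nat \<lceil>ln (real m) / \<delta>\<rceil>)" by linarith
    also have "\<dots> \<le> real T" unfolding T_def by simp
    finally show ?thesis using dpos by (simp add: field_simps)
  qed
  have cntb: "real (cnt (hist T) e) \<le> 4 * \<delta> * real T" if e: "e \<in> E" for e
  proof -
    have "(2::real) ^ cnt (hist T) e \<le> (\<Sum>x\<in>E. (2::real) ^ cnt (hist T) x)"
      by (rule member_le_sum[OF e _ fin]) auto
    also have "\<dots> = real (phi E (hist T))" unfolding phi_def by simp
    also have "\<dots> \<le> real m * (1 + \<delta>) ^ T" using phib m_def by simp
    finally have le: "(2::real) ^ cnt (hist T) e \<le> real m * (1 + \<delta>) ^ T" .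
    have "real (cnt (hist T) e) * ln 2 = ln ((2::real) ^ cnt (hist T) e)" by (simp add: ln_realpow)
    also have "\<dots> \<le> ln (real m * (1 + \<delta>) ^ T)" using le m1 dpos by (subst ln_le_cancel_iff) auto
    also have "\<dots> = ln (real m) + real T * ln (1 + \<delta>)" using m1 dpos by (simp add: ln_mult ln_realpow)
    also have "\<dots> \<le> ln (real m) + real T * \<delta>"
      using ln_le_minus_one[of "1 + \<delta>"] dpos by (intro add_left_mono mult_left_mono) auto
    also have "\<dots> \<le> 2 * \<delta> * real T" using lnm by (simp add: mult.commute)
    finally have "real (cnt (hist T) e) * ln 2 \<le> 2 * \<delta> * real T" .
    moreover have "real (cnt (hist T) e) * (1/2) \<le> real (cnt (hist T) e) * ln 2"
      using ln2_ge_half by (intro mult_left_mono) auto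
    ultimately show ?thesis by simp
  qed
  define \<pi> where "\<pi> = map_pmf (\<lambda>i. hist T ! i) (pmf_of_set {..<T})"
  have ne': "{..<T} \<noteq> {}" using T1 lessThan_empty_iff by (metis not_one_le_zero)
  have sp: "set_pmf \<pi> = (\<lambda>i. hist T ! i) ` {..<T}" unfolding \<pi>_def using ne' by simp
  have "\<forall>F\<in>set_pmf \<pi>. F \<subseteq> E \<and> good F"
    unfolding sp using histP[of T] len[of T] by (auto simp: nth_mem)
  moreover have "\<forall>e\<in>E. measure_pmf.prob \<pi> {F. e \<in> F} \<le> 4 * \<delta>"
  proof
    fix e assume e: "e \<in> E"
    have "measure_pmf.prob \<pi> {F. e \<in> F} = measure_pmf.prob (pmf_of_set {..<T}) {i. e \<in> hist T ! i}"
      unfolding \<pi>_def by simp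
    also have "\<dots> = real (card ({..<T} \<inter> {i. e \<in> hist T ! i})) / real (card {..<T})"
      by (rule measure_pmf_of_set[OF ne']) simp
    also have "card ({..<T} \<inter> {i. e \<in> hist T ! i}) = cnt (hist T) e"
      unfolding cnt_def length_filter_conv_card len by (rule arg_cong[where f=card]) auto
    also have "real (cnt (hist T) e) / real (card {..<T}) \<le> 4 * \<delta>"
      using cntb[OF e] T1 by (simp add: field_simps)
    finally show "measure_pmf.prob \<pi> {F. e \<in> F} \<le> 4 * \<delta>" .
  qed
  ultimately show ?thesis by blast
qed



lemma backward:
  fixes p :: "'v graph \<Rightarrow> nat" and \<G> :: "'v graph set"
  assumes gp: "graph_parameter p" and mo: "monotone_param p" and mu: "max_on_disjoint_union p"
    and wf: "\<forall>G\<in>\<G>. wf_graph G" and r: "r \<ge> 2"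
    and pl: "pliable p (struct_class \<G> r)"
  shows "frac_edge_fragile p \<G>"
  unfolding frac_edge_fragile_def
proof (intro allI impI)
  fix \<epsilon> :: real assume \<epsilon>: "\<epsilon> > 0"
  define eps where "eps = \<epsilon> / 24"
  have eps: "eps > 0" using \<epsilon> unfolding eps_def by simp
  obtain k where k: "\<forall>(s, SA)\<in>struct_class \<G> r. \<exists>SB :: 'v struct.
        is_struct s SB \<and> p (gaifman s SB) \<le> k \<and> d_opt s SA SB \<le> ereal eps"
    using pl eps unfolding pliable_def by blast
  have HB: "\<exists>B. is_struct s B \<and> p (gaifman s B) \<le> k \<and> d_opt s A B \<le> ereal eps"
    if "(s, A) \<in> struct_class \<G> r" for s A using k that by blast
  define K where "K = max k (p ({}, {}))"
  define \<delta> where "\<delta> = 3 * (1 - exp (-2 * eps))"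
  have dpos: "\<delta> > 0" unfolding \<delta>_def using eps by simp
  have d4: "4 * \<delta> \<le> \<epsilon>"
  proof -
    have "1 + (-2 * eps) \<le> exp (-2 * eps)" by (rule exp_ge_add_one_self)
    then show ?thesis unfolding \<delta>_def eps_def by simp
  qed
  show "\<exists>k. \<forall>G\<in>\<G>. \<exists>\<pi>. (\<forall>F\<in>set_pmf \<pi>. F \<subseteq> edges G \<and> p (delete_edges G F) \<le> k) \<and>
          (\<forall>e\<in>edges G. measure_pmf.prob \<pi> {F. e \<in> F} \<le> \<epsilon>)"
  proof (intro exI[of _ K] ballI)
    fix G assume GG: "G \<in> \<G>"
    have wfG: "wf_graph G" using wf GG by blast
    show "\<exists>\<pi>. (\<forall>F\<in>set_pmf \<pi>. F \<subseteq> edges G \<and> p (delete_edges G F) \<le> K) \<and>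
          (\<forall>e\<in>edges G. measure_pmf.prob \<pi> {F. e \<in> F} \<le> \<epsilon>)"
    proof (cases "edges G = {}")
      case True
      have del: "delete_edges G {} = (verts G, {})"
        unfolding delete_edges_def using True by (simp add: edges_def verts_def)
      have "p (verts G, {}) \<le> K"
      proof (cases "verts G = {}")
        case True
        then show ?thesis unfolding K_def by simp
      next
        case False
        define s :: signature where "s = ({}, \<lambda>_. 0)"
        define A :: "'v struct" where "A = (verts G, \<lambda>_ _. 0)"
        have fin: "finite (verts G)" using wfG unfolding wf_graph_def by blast
        have As: "is_struct s A" unfolding is_struct_def A_def using fin False by simp
        have "gaifman s A = (verts G, edges G)" unfolding gaifman_def A_def s_def sig_syms_def
          using True by simp
        then have "gaifman s A = G" using graph_eq[of G] by simp
        then have "(s, A) \<in> struct_class \<G> r"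
          unfolding struct_class_def using As GG by (simp add: is_sig_def s_def sig_syms_def)
        then obtain B where B: "is_struct s B" "p (gaifman s B) \<le> k" using HB by blast
        have "p (verts G, {}) \<le> p (gaifman s B)"
          by (rule p_edgeless[OF gp mo mu fin gaifman_wf[OF B(1)]])
             (use B(1) in \<open>simp add: is_struct_def\<close>)
        then show ?thesis using B(2) unfolding K_def by simp
      qed
      then show ?thesis using True del by (intro exI[of _ "return_pmf {}"]) simp
    next
      case False
      have finE: "finite (edges G)"
      proof -
        have "edges G \<subseteq> Pow (verts G)" using wfG unfolding wf_graph_def by auto
        then show ?thesis using wfG unfolding wf_graph_def by (meson finite_Pow_iff finite_subset)
      qed
      have "\<exists>\<pi>::'v set set pmf. (\<forall>F\<in>set_pmf \<pi>. F \<subseteq> edges G \<and> p (delete_edges G F) \<le> k) \<and>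
            (\<forall>e\<in>edges G. measure_pmf.prob \<pi> {F. e \<in> F} \<le> 4 * \<delta>)"
      proof (rule mwu[OF finE False dpos])
        fix w :: "'v set \<Rightarrow> rat"
        assume "\<And>e. e \<in> edges G \<Longrightarrow> w e > 0" "(\<Sum>e\<in>edges G. (of_rat (w e)::real)) = 1"
        then show "\<exists>F\<subseteq>edges G. p (delete_edges G F) \<le> k \<and> (\<Sum>e\<in>F. (of_rat (w e)::real)) \<le> \<delta>"
          unfolding \<delta>_def using per_weight[OF gp mo mu wfG GG r eps HB] by blast
      qed
      then obtain \<pi> :: "'v set set pmf" where \<pi>: "\<forall>F\<in>set_pmf \<pi>. F \<subseteq> edges G \<and> p (delete_edges G F) \<le> k"
        "\<forall>e\<in>edges G. measure_pmf.prob \<pi> {F. e \<in> F} \<le> 4 * \<delta>" by blast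
      show ?thesis
        using \<pi> d4 unfolding K_def by (intro exI[of _ \<pi>]) force
    qed
  qed
qed



definition AF :: "'v set set \<Rightarrow> 'v struct \<Rightarrow> nat \<Rightarrow> 'v list \<Rightarrow> rat" where
  "AF F A f xs = (if \<exists>e\<in>F. e \<subseteq> set xs then 0 else interp A f xs)"

definition bstruct :: "'v set set set \<Rightarrow> ('v set set \<Rightarrow> 'v \<Rightarrow> 'v) \<Rightarrow> ('v \<Rightarrow> 'v) \<Rightarrow> ('v set set \<Rightarrow> rat) \<Rightarrow> 'v struct \<Rightarrow> 'v struct" where
  "bstruct FF em dec q A = (\<Union>F\<in>FF. em F ` dom A,
     \<lambda>f ys. \<Sum>F\<in>FF. if set ys \<subseteq> em F ` dom A then q F * AF F A f (map dec ys) else 0)"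

definition valF :: "signature \<Rightarrow> 'v struct \<Rightarrow> 'v set set \<Rightarrow> 'v struct \<Rightarrow> ('v \<Rightarrow> 'v) \<Rightarrow> real" where
  "valF s A F C h = (\<Sum>f\<in>sig_syms s. \<Sum>xs\<in>tuples (dom A) (sig_ar s f).
      of_rat (AF F A f xs) * of_rat (interp C f (map h xs)))"

lemma tuples_image:
  assumes "inj_on g V"
  shows "tuples (g ` V) n = map g ` tuples V n"
proof
  show "map g ` tuples V n \<subseteq> tuples (g ` V) n" unfolding tuples_def by (auto simp: subset_iff)
next
  show "tuples (g ` V) n \<subseteq> map g ` tuples V n"
  proof
    fix ys assume ys: "ys \<in> tuples (g ` V) n"
    have "ys = map g (map (inv_into V g) ys)"
      using ys unfolding tuples_def by (auto simp: f_inv_into_f intro!: map_idI[symmetric])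
    moreover have "map (inv_into V g) ys \<in> tuples V n"
      using ys unfolding tuples_def by (auto intro: inv_into_into)
    ultimately show "ys \<in> map g ` tuples V n" by blast
  qed
qed

lemma inj_map_tuples:
  assumes "inj_on g V"
  shows "inj_on (map g) (tuples V n)"
  by (rule inj_on_mapI, rule inj_on_subset[OF assms]) (auto simp: tuples_def)

lemma bstruct_dom: "dom (bstruct FF em dec q A) = (\<Union>F\<in>FF. em F ` dom A)"
  unfolding bstruct_def by simp

lemma bstruct_interp: "interp (bstruct FF em dec q A) f ys =
   (\<Sum>F\<in>FF. if set ys \<subseteq> em F ` dom A then q F * AF F A f (map dec ys) else 0)"
  unfolding bstruct_def by simp

context
  fixes s :: signature and A :: "'v struct" and FF :: "'v set set set"
    and em :: "'v set set \<Rightarrow> 'v \<Rightarrow> 'v" and dec :: "'v \<Rightarrow> 'v" and q :: "'v set set \<Rightarrow> rat"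
  assumes finFF: "finite FF" and finA: "finite (dom A)"
    and sig: "is_sig s"
    and injem: "\<And>F. F \<in> FF \<Longrightarrow> inj_on (em F) (dom A)"
    and decem: "\<And>F x. F \<in> FF \<Longrightarrow> x \<in> dom A \<Longrightarrow> dec (em F x) = x"
begin

lemma valB_inner:
  assumes F: "F \<in> FF"
  shows "(\<Sum>ys\<in>tuples (\<Union>F\<in>FF. em F ` dom A) n. if set ys \<subseteq> em F ` dom A then
      of_rat (q F) * of_rat (AF F A f (map dec ys)) * of_rat (interp C f (map h ys)) else (0::real))
    = of_rat (q F) * (\<Sum>xs\<in>tuples (dom A) n. of_rat (AF F A f xs) * of_rat (interp C f (map (h \<circ> em F) xs)))"
proof -
  let ?T = "\<lambda>ys. of_rat (q F) * of_rat (AF F A f (map dec ys)) * (of_rat (interp C f (map h ys))::real)"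
  have sub: "{ys\<in>tuples (\<Union>F\<in>FF. em F ` dom A) n. set ys \<subseteq> em F ` dom A} = tuples (em F ` dom A) n"
    using F unfolding tuples_def by auto
  have "(\<Sum>ys\<in>tuples (\<Union>F\<in>FF. em F ` dom A) n. if set ys \<subseteq> em F ` dom A then ?T ys else 0)
      = (\<Sum>ys\<in>{ys\<in>tuples (\<Union>F\<in>FF. em F ` dom A) n. set ys \<subseteq> em F ` dom A}. ?T ys)"
    by (rule sum.inter_filter[symmetric]) (simp add: finFF finA)
  also have "\<dots> = (\<Sum>ys\<in>tuples (em F ` dom A) n. ?T ys)" unfolding sub ..
  also have "\<dots> = (\<Sum>xs\<in>tuples (dom A) n. ?T (map (em F) xs))"
    unfolding tuples_image[OF injem[OF F]]
    by (rule sum.reindex[OF inj_map_tuples[OF injem[OF F]], unfolded comp_def])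
  also have "\<dots> = (\<Sum>xs\<in>tuples (dom A) n. of_rat (q F) * (of_rat (AF F A f xs) * of_rat (interp C f (map (h \<circ> em F) xs))))"
  proof (rule sum.cong[OF refl])
    fix xs assume xs: "xs \<in> tuples (dom A) n"
    have "map dec (map (em F) xs) = xs"
      using xs decem[OF F] unfolding tuples_def by (auto intro!: map_idI simp: subset_iff)
    then show "?T (map (em F) xs) = of_rat (q F) * (of_rat (AF F A f xs) * of_rat (interp C f (map (h \<circ> em F) xs)))"
      by simp
  qed
  also have "\<dots> = of_rat (q F) * (\<Sum>xs\<in>tuples (dom A) n. of_rat (AF F A f xs) * of_rat (interp C f (map (h \<circ> em F) xs)))"
    by (simp add: sum_distrib_left)
  finally show ?thesis .
qed

lemma valB:
  "val s (bstruct FF em dec q A) C h = (\<Sum>F\<in>FF. of_rat (q F) * valF s A F C (h \<circ> em F))"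
proof -
  let ?D = "\<Union>F\<in>FF. em F ` dom A"
  have "val s (bstruct FF em dec q A) C h = (\<Sum>f\<in>sig_syms s. \<Sum>ys\<in>tuples ?D (sig_ar s f).
      \<Sum>F\<in>FF. if set ys \<subseteq> em F ` dom A then
      of_rat (q F) * of_rat (AF F A f (map dec ys)) * of_rat (interp C f (map h ys)) else (0::real))"
    unfolding val_def bstruct_dom bstruct_interp
    by (intro sum.cong refl) (simp add: of_rat_sum sum_distrib_right of_rat_mult if_distrib if_distribR cong: if_cong)
  also have "\<dots> = (\<Sum>f\<in>sig_syms s. \<Sum>F\<in>FF. \<Sum>ys\<in>tuples ?D (sig_ar s f).
      if set ys \<subseteq> em F ` dom A then
      of_rat (q F) * of_rat (AF F A f (map dec ys)) * of_rat (interp C f (map h ys)) else (0::real))"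
    by (intro sum.cong refl) (rule sum.swap)
  also have "\<dots> = (\<Sum>f\<in>sig_syms s. \<Sum>F\<in>FF. of_rat (q F) * (\<Sum>xs\<in>tuples (dom A) (sig_ar s f). of_rat (AF F A f xs) * of_rat (interp C f (map (h \<circ> em F) xs))))"
    by (intro sum.cong refl) (rule valB_inner)
  also have "\<dots> = (\<Sum>F\<in>FF. \<Sum>f\<in>sig_syms s. of_rat (q F) * (\<Sum>xs\<in>tuples (dom A) (sig_ar s f). of_rat (AF F A f xs) * of_rat (interp C f (map (h \<circ> em F) xs))))"
    by (rule sum.swap)
  also have "\<dots> = (\<Sum>F\<in>FF. of_rat (q F) * valF s A F C (h \<circ> em F))"
    unfolding valF_def by (simp add: sum_distrib_left)
  finally show ?thesis .
qed

end

lemma valF_le: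
  assumes "is_struct s A" "is_struct s C" "h ` dom A \<subseteq> dom C"
  shows "valF s A F C h \<le> val s A C h"
  unfolding valF_def val_def
proof (intro sum_mono)
  fix f xs assume f: "f \<in> sig_syms s" and xs: "xs \<in> tuples (dom A) (sig_ar s f)"
  have "0 \<le> interp C f (map h xs)" using assms f map_in_tuples[OF xs assms(3)] unfolding is_struct_def by auto
  moreover have "0 \<le> interp A f xs" using assms f xs unfolding is_struct_def by auto
  ultimately show "of_rat (AF F A f xs) * of_rat (interp C f (map h xs)) \<le> (of_rat (interp A f xs) * of_rat (interp C f (map h xs)) :: real)"
    unfolding AF_def by (auto intro: mult_right_mono)
qed

lemma valF_sum:
  "(\<Sum>F\<in>FF. of_rat (q F) * valF s A F C h) =
   (\<Sum>f\<in>sig_syms s. \<Sum>xs\<in>tuples (dom A) (sig_ar s f).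
      of_rat (interp A f xs) * of_rat (interp C f (map h xs)) *
      (\<Sum>F\<in>FF. if \<exists>e\<in>F. e \<subseteq> set xs then 0 else (of_rat (q F)::real)))"
proof -
  have "(\<Sum>F\<in>FF. of_rat (q F) * valF s A F C h) = (\<Sum>F\<in>FF. \<Sum>f\<in>sig_syms s. \<Sum>xs\<in>tuples (dom A) (sig_ar s f).
      of_rat (interp A f xs) * of_rat (interp C f (map h xs)) * (if \<exists>e\<in>F. e \<subseteq> set xs then 0 else (of_rat (q F)::real)))"
    unfolding valF_def AF_def sum_distrib_left by (intro sum.cong refl) (auto simp: algebra_simps)
  also have "\<dots> = (\<Sum>f\<in>sig_syms s. \<Sum>F\<in>FF. \<Sum>xs\<in>tuples (dom A) (sig_ar s f).
      of_rat (interp A f xs) * of_rat (interp C f (map h xs)) * (if \<exists>e\<in>F. e \<subseteq> set xs then 0 else (of_rat (q F)::real)))"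
    by (rule sum.swap)
  also have "\<dots> = (\<Sum>f\<in>sig_syms s. \<Sum>xs\<in>tuples (dom A) (sig_ar s f). \<Sum>F\<in>FF.
      of_rat (interp A f xs) * of_rat (interp C f (map h xs)) * (if \<exists>e\<in>F. e \<subseteq> set xs then 0 else (of_rat (q F)::real)))"
    by (intro sum.cong refl) (rule sum.swap)
  finally show ?thesis by (simp add: sum_distrib_left)
qed



lemma prob_broken:
  fixes \<pi> :: "'v set set pmf"
  assumes finE: "finite E" and piE: "\<forall>F\<in>set_pmf \<pi>. F \<subseteq> E"
    and pe: "\<forall>e\<in>E. measure_pmf.prob \<pi> {F. e \<in> F} \<le> c" and c: "c \<ge> 0"
    and len: "length xs \<le> r"
  shows "measure_pmf.prob \<pi> {F. \<exists>e\<in>F. e \<subseteq> set xs} \<le> 2 ^ r * c"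
proof -
  define S where "S = {e\<in>E. e \<subseteq> set xs}"
  have finS: "finite S" using finE unfolding S_def by simp
  have "measure_pmf.prob \<pi> {F. \<exists>e\<in>F. e \<subseteq> set xs} = measure_pmf.prob \<pi> ({F. \<exists>e\<in>F. e \<subseteq> set xs} \<inter> set_pmf \<pi>)"
    by (simp add: measure_Int_set_pmf)
  also have "\<dots> \<le> measure_pmf.prob \<pi> (\<Union>e\<in>S. {F. e \<in> F})"
    by (rule measure_pmf.finite_measure_mono) (use piE in \<open>auto simp: S_def\<close>)
  also have "\<dots> \<le> (\<Sum>e\<in>S. measure_pmf.prob \<pi> {F. e \<in> F})"
    by (rule measure_pmf.finite_measure_subadditive_finite[OF finS]) auto
  also have "\<dots> \<le> (\<Sum>e\<in>S. c)" by (rule sum_mono) (use pe in \<open>auto simp: S_def\<close>)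
  also have "\<dots> = real (card S) * c" by simp
  also have "\<dots> \<le> 2 ^ r * c"
  proof -
    have "S \<subseteq> Pow (set xs)" unfolding S_def by auto
    then have "card S \<le> card (Pow (set xs))" by (intro card_mono) auto
    also have "\<dots> = 2 ^ card (set xs)" by (simp add: card_Pow)
    also have "\<dots> \<le> 2 ^ r" using card_length[of xs] len by (intro power_increasing) auto
    finally have "real (card S) \<le> 2 ^ r" by (metis of_nat_le_iff of_nat_numeral of_nat_power)
    then show ?thesis using c by (intro mult_right_mono) auto
  qed
  finally show ?thesis .
qed

lemma rat_approx:
  assumes "\<forall>F\<in>FF. 0 < (a F :: real)" "\<eta> > 0"
  shows "\<exists>q. \<forall>F\<in>FF. 0 \<le> q F \<and> of_rat (q F) \<le> a F \<and> a F - of_rat (q F) \<le> \<eta>"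
proof -
  have "\<forall>F\<in>FF. \<exists>r. 0 \<le> r \<and> of_rat r \<le> a F \<and> a F - of_rat r \<le> \<eta>"
  proof
    fix F assume F: "F \<in> FF"
    have "max 0 (a F - \<eta>) < a F" using assms F by auto
    then obtain x where x: "x \<in> \<rat>" "max 0 (a F - \<eta>) < x" "x < a F" using Rats_dense_in_real by blast
    then obtain r where "x = of_rat r" by (auto elim: Rats_cases)
    then show "\<exists>r. 0 \<le> r \<and> of_rat r \<le> a F \<and> a F - of_rat r \<le> \<eta>" using x
      by (intro exI[of _ r]) (auto simp: zero_le_of_rat_iff[symmetric])
  qed
  then show ?thesis by (rule bchoice)
qed

lemma valF_cong:
  assumes "\<And>x. x \<in> dom A \<Longrightarrow> h x = h' x"
  shows "valF s A F C h = valF s A F C h'"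
proof -
  have m: "map h xs = map h' xs" if "xs \<in> tuples (dom A) n" for xs n
    using that assms by (auto simp: tuples_def intro!: map_cong)
  show ?thesis unfolding valF_def
    by (intro sum.cong refl) (simp add: m)
qed

lemma exists_emb:
  assumes "infinite (UNIV :: 'v set)" "finite (X :: 'a set)"
  shows "\<exists>emb :: 'a \<Rightarrow> 'v. inj_on emb X"
proof -
  obtain Y :: "'v set" where Y: "finite Y" "card Y = card X"
    using infinite_arbitrarily_large[OF assms(1)] by blast
  then show ?thesis using card_le_inj[OF assms(2) Y(1)] by auto
qed



lemma fwd_one:
  fixes p :: "'v graph \<Rightarrow> nat" and s :: signature and A :: "'v struct" and \<pi> :: "'v set set pmf"
  assumes gp: "graph_parameter p" and mo: "monotone_param p" and mu: "max_on_disjoint_union p"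
    and inf: "infinite (UNIV :: 'v set)"
    and sig: "is_sig s" and sA: "is_struct s A" and ar: "\<forall>f\<in>sig_syms s. sig_ar s f \<le> r"
    and eps: "eps > 0"
    and piE: "\<forall>F\<in>set_pmf \<pi>. F \<subseteq> edges (gaifman s A) \<and> p (delete_edges (gaifman s A) F) \<le> k"
    and pip: "\<forall>e\<in>edges (gaifman s A). measure_pmf.prob \<pi> {F. e \<in> F} \<le> (1 - exp (-eps)) / (2 * 2 ^ r)"
  shows "\<exists>B. is_struct s B \<and> p (gaifman s B) \<le> k \<and> d_opt s A B \<le> ereal eps"
proof -
  define V where "V = dom A"
  define G where "G = gaifman s A"
  define E where "E = edges G"
  have finV: "finite V" and Vne: "V \<noteq> {}" using sA unfolding is_struct_def V_def by auto
  have wfG: "wf_graph G" unfolding G_def by (rule gaifman_wf[OF sA])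
  have vG: "verts G = V" unfolding G_def V_def by simp
  have Esub: "e \<subseteq> V \<and> card e = 2" if "e \<in> E" for e using wfG that vG unfolding wf_graph_def E_def by auto
  have finE: "finite E"
  proof -
    have "E \<subseteq> Pow V" using Esub by auto
    then show ?thesis using finV by (meson finite_Pow_iff finite_subset)
  qed
  define FF where "FF = set_pmf \<pi>"
  have FFE: "F \<subseteq> E" if "F \<in> FF" for F using piE that unfolding FF_def E_def G_def by auto
  have finFF: "finite FF"
  proof -
    have "FF \<subseteq> Pow E" using FFE by auto
    then show ?thesis using finE by (meson finite_Pow_iff finite_subset)
  qed
  have FFne: "FF \<noteq> {}" unfolding FF_def by (rule set_pmf_not_empty)
  define \<delta> where "\<delta> = 1 - exp (-eps)"
  have dpos: "0 < \<delta>" unfolding \<delta>_def using eps by simp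
  have dexp: "1 - \<delta> = exp (-eps)" unfolding \<delta>_def by simp
  define \<eta> where "\<eta> = \<delta> / 2 / real (card FF)"
  have cardFF: "0 < card FF" using finFF FFne by (simp add: card_gt_0_iff)
  have etapos: "0 < \<eta>" unfolding \<eta>_def using dpos cardFF by simp
  have "\<forall>F\<in>FF. 0 < pmf \<pi> F" unfolding FF_def by (simp add: set_pmf_iff)
  then obtain q where q: "\<forall>F\<in>FF. 0 \<le> q F \<and> of_rat (q F) \<le> pmf \<pi> F \<and> pmf \<pi> F - of_rat (q F) \<le> \<eta>"
    using rat_approx[of FF "pmf \<pi>" \<eta>] etapos by blast
  obtain emb :: "'v set set \<times> 'v \<Rightarrow> 'v" where emb: "inj_on emb (FF \<times> V)"
    using exists_emb[OF inf, of "FF \<times> V"] finFF finV by blast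
  define em where "em F x = emb (F, x)" for F x
  define dec where "dec y = snd (inv_into (FF \<times> V) emb y)" for y
  have injem: "inj_on (em F) V" if "F \<in> FF" for F
    using emb that unfolding em_def inj_on_def by auto
  have decem: "dec (em F x) = x" if "F \<in> FF" "x \<in> V" for F x
    unfolding dec_def em_def using emb that by (simp add: inv_into_f_f)
  have emdisj: "F = F'" if "F \<in> FF" "F' \<in> FF" "x \<in> V" "x' \<in> V" "em F x = em F' x'" for F F' x x'
    using emb that unfolding em_def inj_on_def by blast
  define B where "B = bstruct FF em dec q A"
  define D where "D = (\<Union>F\<in>FF. em F ` V)"
  have dB: "dom B = D" unfolding B_def D_def V_def by (simp add: bstruct_dom)
  have finD: "finite D" unfolding D_def using finFF finV by simp
  have Dne: "D \<noteq> {}" unfolding D_def using FFne Vne by auto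
  have decD: "dec y \<in> V" if "y \<in> D" for y using that decem unfolding D_def by auto
  have Anonneg: "0 \<le> interp A f xs" if "f \<in> sig_syms s" "xs \<in> tuples V (sig_ar s f)" for f xs
    using sA that unfolding is_struct_def V_def by auto
  have AFnn: "0 \<le> AF F A f xs" if "f \<in> sig_syms s" "xs \<in> tuples V (sig_ar s f)" for F f xs
    using Anonneg[OF that] unfolding AF_def by auto
  have Bint: "interp B f ys = (\<Sum>F\<in>FF. if set ys \<subseteq> em F ` V then q F * AF F A f (map dec ys) else 0)" for f ys
    unfolding B_def bstruct_interp V_def ..
  have Bs: "is_struct s B"
    unfolding is_struct_def dB
  proof (intro conjI finD Dne ballI)
    fix f ys assume f: "f \<in> sig_syms s" and ys: "ys \<in> tuples D (sig_ar s f)"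
    show "0 \<le> interp B f ys" unfolding Bint
    proof (rule sum_nonneg)
      fix F assume F: "F \<in> FF"
      show "0 \<le> (if set ys \<subseteq> em F ` V then q F * AF F A f (map dec ys) else 0)"
      proof (cases "set ys \<subseteq> em F ` V")
        case True
        then have "map dec ys \<in> tuples V (sig_ar s f)" using ys decem[OF F] unfolding tuples_def by auto
        then show ?thesis using True AFnn[OF f] q F by auto
      qed simp
    qed
  qed
  note ctx = finFF _ sig injem decem
  have finA: "finite (dom A)" using finV V_def by simp
  have injem': "\<And>F. F \<in> FF \<Longrightarrow> inj_on (em F) (dom A)" using injem V_def by simp
  have decem': "\<And>F x. F \<in> FF \<Longrightarrow> x \<in> dom A \<Longrightarrow> dec (em F x) = x" using decem V_def by simp
  have valB': "val s B C h = (\<Sum>F\<in>FF. of_rat (q F) * valF s A F C (h \<circ> em F))" for C h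
    unfolding B_def by (rule valB[OF finFF finA sig injem' decem'])

  have qsum: "(\<Sum>F\<in>FF. (of_rat (q F)::real)) \<le> 1"
  proof -
    have "(\<Sum>F\<in>FF. (of_rat (q F)::real)) \<le> (\<Sum>F\<in>FF. pmf \<pi> F)" using q by (intro sum_mono) auto
    also have "\<dots> = 1" unfolding FF_def by (rule sum_pmf_eq_1) (use finFF FF_def in auto)
    finally show ?thesis .
  qed
  have qgood: "exp (-eps) \<le> (\<Sum>F\<in>FF. if \<exists>e\<in>F. e \<subseteq> set xs then 0 else (of_rat (q F)::real))"
    if f: "f \<in> sig_syms s" and xs: "xs \<in> tuples V (sig_ar s f)" for f xs
  proof -
    let ?br = "\<lambda>F. \<exists>e\<in>F. e \<subseteq> set xs"
    have lenr: "length xs \<le> r" using xs ar f unfolding tuples_def by auto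
    have pbr: "measure_pmf.prob \<pi> {F. ?br F} \<le> 2 ^ r * ((1 - exp (-eps)) / (2 * 2 ^ r))"
      by (rule prob_broken[OF finE _ _ _ lenr]) (use piE pip dpos in \<open>auto simp: E_def G_def \<delta>_def\<close>)
    then have pbr': "measure_pmf.prob \<pi> {F. ?br F} \<le> \<delta> / 2" unfolding \<delta>_def by simp
    have "(\<Sum>F\<in>FF. if ?br F then 0 else pmf \<pi> F) = (\<Sum>F\<in>{F\<in>FF. \<not> ?br F}. pmf \<pi> F)"
      by (subst sum.inter_filter[OF finFF]) (auto intro: sum.cong)
    also have "\<dots> = measure_pmf.prob \<pi> {F\<in>FF. \<not> ?br F}"
      by (rule measure_measure_pmf_finite[symmetric]) (use finFF in simp)
    also have "{F\<in>FF. \<not> ?br F} = (UNIV - {F. ?br F}) \<inter> set_pmf \<pi>" unfolding FF_def by auto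
    also have "measure_pmf.prob \<pi> \<dots> = measure_pmf.prob \<pi> (UNIV - {F. ?br F})" by (rule measure_Int_set_pmf)
    also have "\<dots> = 1 - measure_pmf.prob \<pi> {F. ?br F}"
      using measure_pmf.prob_compl[of "{F. ?br F}" \<pi>] by simp
    finally have s1: "(\<Sum>F\<in>FF. if ?br F then 0 else pmf \<pi> F) \<ge> 1 - \<delta> / 2" using pbr' by simp
    have "(\<Sum>F\<in>FF. if ?br F then 0 else pmf \<pi> F) - real (card FF) * \<eta> = (\<Sum>F\<in>FF. (if ?br F then 0 else pmf \<pi> F) - \<eta>)"
      by (simp add: sum_subtractf)
    also have "\<dots> \<le> (\<Sum>F\<in>FF. if ?br F then 0 else (of_rat (q F)::real))"
      using q etapos by (intro sum_mono) auto
    finally have "(\<Sum>F\<in>FF. if ?br F then 0 else pmf \<pi> F) - real (card FF) * \<eta> \<le> (\<Sum>F\<in>FF. if ?br F then 0 else (of_rat (q F)::real))" .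
    moreover have "real (card FF) * \<eta> = \<delta> / 2" unfolding \<eta>_def using cardFF by simp
    ultimately show ?thesis using s1 dexp by linarith
  qed

  have dist: "ln_dist (opt s A C) (opt s B C) \<le> ereal eps" if Cs: "is_struct s C" for C
  proof -
    have finC: "finite (dom C)" and Cne: "dom C \<noteq> {}" using Cs unfolding is_struct_def by auto
    have oA0: "0 \<le> opt s A C" by (rule opt_nonneg[OF sA Cs])
    have up: "opt s B C \<le> opt s A C"
    proof -
      obtain hB where hB: "hB \<in> dom B \<rightarrow>\<^sub>E dom C" "opt s B C = val s B C hB"
        using opt_attained[of B C s] finD dB finC Cne by auto
      have "val s B C hB = (\<Sum>F\<in>FF. of_rat (q F) * valF s A F C (hB \<circ> em F))" by (rule valB')
      also have "\<dots> \<le> (\<Sum>F\<in>FF. of_rat (q F) * opt s A C)"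
      proof (rule sum_mono)
        fix F assume F: "F \<in> FF"
        have img: "(hB \<circ> em F) ` dom A \<subseteq> dom C" using hB(1) F dB unfolding D_def V_def by auto
        have "valF s A F C (hB \<circ> em F) \<le> val s A C (hB \<circ> em F)" by (rule valF_le[OF sA Cs img])
        also have "\<dots> \<le> opt s A C" by (rule opt_ge[OF finA finC img])
        finally show "of_rat (q F) * valF s A F C (hB \<circ> em F) \<le> of_rat (q F) * opt s A C"
          using q F by (intro mult_left_mono) auto
      qed
      also have "\<dots> = (\<Sum>F\<in>FF. of_rat (q F)) * opt s A C" by (simp add: sum_distrib_right)
      also have "\<dots> \<le> 1 * opt s A C" using qsum oA0 by (intro mult_right_mono) auto
      finally show ?thesis using hB by simp
    qed
    have low: "exp (-eps) * opt s A C \<le> opt s B C"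
    proof -
      obtain hA where hA: "hA \<in> dom A \<rightarrow>\<^sub>E dom C" "opt s A C = val s A C hA"
        using opt_attained[of A C s] finA finC Cne by auto
      define h where "h y = hA (dec y)" for y
      have himg: "h ` dom B \<subseteq> dom C" using hA(1) decD dB unfolding h_def V_def by auto
      have "val s B C h = (\<Sum>F\<in>FF. of_rat (q F) * valF s A F C (h \<circ> em F))" by (rule valB')
      also have "\<dots> = (\<Sum>F\<in>FF. of_rat (q F) * valF s A F C hA)"
      proof (rule sum.cong[OF refl])
        fix F assume F: "F \<in> FF"
        have "valF s A F C (h \<circ> em F) = valF s A F C hA"
          by (rule valF_cong) (simp add: h_def decem'[OF F])
        then show "of_rat (q F) * valF s A F C (h \<circ> em F) = of_rat (q F) * valF s A F C hA" by simp
      qed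
      also have "\<dots> = (\<Sum>f\<in>sig_syms s. \<Sum>xs\<in>tuples (dom A) (sig_ar s f).
          of_rat (interp A f xs) * of_rat (interp C f (map hA xs)) *
          (\<Sum>F\<in>FF. if \<exists>e\<in>F. e \<subseteq> set xs then 0 else (of_rat (q F)::real)))"
        by (rule valF_sum)
      also have "\<dots> \<ge> (\<Sum>f\<in>sig_syms s. \<Sum>xs\<in>tuples (dom A) (sig_ar s f).
          of_rat (interp A f xs) * of_rat (interp C f (map hA xs)) * exp (-eps))"
      proof (intro sum_mono)
        fix f xs assume f: "f \<in> sig_syms s" and xs: "xs \<in> tuples (dom A) (sig_ar s f)"
        have "map hA xs \<in> tuples (dom C) (sig_ar s f)" using xs hA(1) by (intro map_in_tuples) auto
        then have "0 \<le> interp C f (map hA xs)" using Cs f unfolding is_struct_def by auto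
        moreover have "0 \<le> interp A f xs" using Anonneg f xs V_def by simp
        ultimately have "0 \<le> (of_rat (interp A f xs) * of_rat (interp C f (map hA xs)) :: real)" by simp
        then show "of_rat (interp A f xs) * of_rat (interp C f (map hA xs)) * exp (-eps)
          \<le> of_rat (interp A f xs) * of_rat (interp C f (map hA xs)) *
          (\<Sum>F\<in>FF. if \<exists>e\<in>F. e \<subseteq> set xs then 0 else (of_rat (q F)::real))"
          using qgood[OF f] xs V_def by (intro mult_left_mono) auto
      qed
      also have "(\<Sum>f\<in>sig_syms s. \<Sum>xs\<in>tuples (dom A) (sig_ar s f).
          of_rat (interp A f xs) * of_rat (interp C f (map hA xs)) * exp (-eps)) = exp (-eps) * val s A C hA"
        unfolding val_def by (simp add: sum_distrib_left sum_distrib_right algebra_simps)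
      finally have "exp (-eps) * opt s A C \<le> val s B C h" using hA by simp
      also have "\<dots> \<le> opt s B C" by (rule opt_ge[OF _ finC himg]) (simp add: dB finD)
      finally show ?thesis .
    qed
    show ?thesis
      by (rule ln_dist_le_upper[OF opt_nonneg[OF Bs Cs] up low]) (use eps in simp)
  qed
  have dopt: "d_opt s A B \<le> ereal eps" by (rule d_opt_leI) (rule dist)

  define HF where "HF F = (em F ` V, (\<lambda>e. em F ` e) ` (E - F))" for F
  have wfHF: "wf_graph (HF F)" if F: "F \<in> FF" for F
    unfolding wf_graph_def HF_def verts_pair edges_pair
  proof (intro conjI ballI)
    show "finite (em F ` V)" using finV by simp
    fix e' assume "e' \<in> (\<lambda>e. em F ` e) ` (E - F)"
    then obtain e where e: "e \<in> E" "e' = em F ` e" by auto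
    show "e' \<subseteq> em F ` V" using Esub[OF e(1)] e by auto
    have "card (em F ` e) = card e" using injem[OF F] Esub[OF e(1)] by (meson card_image inj_on_subset)
    then show "card e' = 2" using Esub[OF e(1)] e by simp
  qed
  have pHF: "p (HF F) \<le> k" if F: "F \<in> FF" for F
  proof -
    have del: "delete_edges G F = (V, E - F)" unfolding delete_edges_def E_def using vG by simp
    have wfdel: "wf_graph (delete_edges G F)" unfolding del wf_graph_def using finV Esub by auto
    have iso: "graph_iso (delete_edges G F) (HF F)"
      using iso_image[of "em F" "delete_edges G F"] injem[OF F] unfolding del HF_def by simp
    have "p (delete_edges G F) = p (HF F)" by (rule p_iso[OF gp wfdel wfHF[OF F] iso])
    then have "p (HF F) = p (delete_edges G F)" by simp
    also have "\<dots> \<le> k" using piE F unfolding FF_def G_def by auto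
    finally show ?thesis .
  qed
  define UG where "UG S = (\<Union>F\<in>S. em F ` V, \<Union>F\<in>S. edges (HF F))" for S
  obtain F0 where F0: "F0 \<in> FF" using FFne by auto
  have UGb: "wf_graph (UG S) \<and> p (UG S) \<le> k" if "S \<subseteq> FF" for S
  proof -
    have "finite S" using that finFF finite_subset by blast
    then show ?thesis using that
    proof (induction S rule: finite_induct)
      case empty
      have eq: "UG {} = ({}, {})" unfolding UG_def by simp
      have wf0: "wf_graph ({}, {})" unfolding wf_graph_def by simp
      have "subgraph ({}, {}) (HF F0)" unfolding subgraph_def using wf0 by simp
      then have "p ({}, {}) \<le> p (HF F0)" by (rule p_mono[OF mo wfHF[OF F0]])
      then show ?case using pHF[OF F0] eq wf0 by simp
    next
      case (insert F S)
      have F: "F \<in> FF" and S: "S \<subseteq> FF" using insert by auto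
      have IH: "wf_graph (UG S)" "p (UG S) \<le> k" using insert S by auto
      have un: "UG (insert F S) = graph_union (HF F) (UG S)"
        unfolding UG_def graph_union_def HF_def by simp
      have disj: "verts (HF F) \<inter> verts (UG S) = {}"
      proof -
        have "x \<notin> em F' ` V" if x: "x \<in> em F ` V" and F': "F' \<in> S" for x F'
        proof
          assume "x \<in> em F' ` V"
          then obtain b where b: "b \<in> V" "x = em F' b" by auto
          obtain a where a: "a \<in> V" "x = em F a" using x by auto
          have "F = F'" by (rule emdisj[OF F _ a(1) b(1)]) (use F' S a b in auto)
          then show False using F' insert(2) by simp
        qed
        then show ?thesis unfolding HF_def UG_def by auto
      qed
      have wfU: "wf_graph (graph_union (HF F) (UG S))"
        unfolding wf_graph_def graph_union_def verts_pair edges_pair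
      proof (intro conjI ballI)
        show "finite (verts (HF F) \<union> verts (UG S))" using wfHF[OF F] IH(1) unfolding wf_graph_def by simp
        fix e assume e: "e \<in> edges (HF F) \<union> edges (UG S)"
        show "e \<subseteq> verts (HF F) \<union> verts (UG S)"
          using e wfHF[OF F] IH(1) unfolding wf_graph_def by blast
        show "card e = 2"
          using e wfHF[OF F] IH(1) unfolding wf_graph_def by blast
      qed
      have "p (graph_union (HF F) (UG S)) = max (p (HF F)) (p (UG S))"
        by (rule p_union[OF mu wfHF[OF F] IH(1) disj])
      then show ?case using un wfU pHF[OF F] IH by simp
    qed
  qed
  have UGFF: "wf_graph (UG FF)" "p (UG FF) \<le> k" using UGb[of FF] by auto
  have sub: "subgraph (gaifman s B) (UG FF)"
    unfolding subgraph_def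
  proof (intro conjI)
    show "wf_graph (gaifman s B)" by (rule gaifman_wf[OF Bs])
    show "verts (gaifman s B) \<subseteq> verts (UG FF)" unfolding UG_def using dB D_def by simp
    show "edges (gaifman s B) \<subseteq> edges (UG FF)"
    proof
      fix e' assume "e' \<in> edges (gaifman s B)"
      then obtain u v f ys where e': "e' = {u, v}" "u \<noteq> v" "f \<in> sig_syms s"
        "ys \<in> tuples D (sig_ar s f)" "interp B f ys > 0" "u \<in> set ys" "v \<in> set ys"
        unfolding gaifman_edges dB by blast
      have "(\<Sum>F\<in>FF. if set ys \<subseteq> em F ` V then q F * AF F A f (map dec ys) else 0) \<noteq> 0"
        using e'(5) Bint by simp
      then obtain F where F: "F \<in> FF" and nz: "(if set ys \<subseteq> em F ` V then q F * AF F A f (map dec ys) else 0) \<noteq> 0"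
        by (rule sum.not_neutral_contains_not_neutral)
      have ysF: "set ys \<subseteq> em F ` V" using nz by (auto split: if_splits)
      define xs where "xs = map dec ys"
      have xs: "xs \<in> tuples V (sig_ar s f)" using e'(4) ysF decem[OF F] unfolding xs_def tuples_def by auto
      have AFnz: "AF F A f xs \<noteq> 0" using nz ysF unfolding xs_def by auto
      then have nbr: "\<not> (\<exists>e\<in>F. e \<subseteq> set xs)" and Apos': "interp A f xs \<noteq> 0" unfolding AF_def by (auto split: if_splits)
      have Apos: "interp A f xs > 0" using Apos' Anonneg[OF e'(3) xs] by simp
      obtain u' where u': "u' \<in> V" "u = em F u'" using e'(6) ysF by auto
      obtain v' where v': "v' \<in> V" "v = em F v'" using e'(7) ysF by auto
      have u'xs: "u' \<in> set xs" using e'(6) u' decem[OF F] unfolding xs_def by force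
      have v'xs: "v' \<in> set xs" using e'(7) v' decem[OF F] unfolding xs_def by force
      have neq: "u' \<noteq> v'" using e'(2) u' v' by auto
      have xsA: "xs \<in> tuples (dom A) (sig_ar s f)" using xs V_def by simp
      have eE: "{u', v'} \<in> E" unfolding E_def G_def
        by (rule gaifman_edgeI[OF e'(3) xsA Apos u'xs v'xs neq])
      have nF: "{u', v'} \<notin> F" using nbr u'xs v'xs by auto
      have "e' = em F ` {u', v'}" using e'(1) u' v' by simp
      moreover have "{u', v'} \<in> E - F" using eE nF by simp
      ultimately have "e' \<in> edges (HF F)" unfolding HF_def edges_pair by (rule image_eqI)
      then show "e' \<in> edges (UG FF)" unfolding UG_def using F by auto
    qed
  qed
  have "p (gaifman s B) \<le> p (UG FF)" by (rule p_mono[OF mo UGFF(1) sub])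
  then have "p (gaifman s B) \<le> k" using UGFF(2) by simp
  then show ?thesis using Bs dopt by blast
qed



lemma forward:
  fixes p :: "'v graph \<Rightarrow> nat" and \<G> :: "'v graph set"
  assumes gp: "graph_parameter p" and mo: "monotone_param p" and mu: "max_on_disjoint_union p"
    and inf: "infinite (UNIV :: 'v set)"
    and fr: "frac_edge_fragile p \<G>"
  shows "pliable p (struct_class \<G> r)"
  unfolding pliable_def
proof (intro allI impI)
  fix \<epsilon> :: real assume \<epsilon>: "\<epsilon> > 0"
  define e' where "e' = (1 - exp (-\<epsilon>)) / (2 * 2 ^ r)"
  have e'pos: "e' > 0" unfolding e'_def using \<epsilon> by simp
  from fr[unfolded frac_edge_fragile_def, rule_format, OF e'pos]
  obtain k where k: "\<forall>G\<in>\<G>. \<exists>\<pi> :: 'v set set pmf.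
        (\<forall>F\<in>set_pmf \<pi>. F \<subseteq> edges G \<and> p (delete_edges G F) \<le> k) \<and>
        (\<forall>e\<in>edges G. measure_pmf.prob \<pi> {F. e \<in> F} \<le> e')" by (elim exE)
  have one: "\<exists>SB :: 'v struct. is_struct s SB \<and> p (gaifman s SB) \<le> k \<and> d_opt s SA SB \<le> ereal \<epsilon>"
    if sA: "(s, SA) \<in> struct_class \<G> r" for s SA
  proof -
    have sig: "is_sig s" and sAs: "is_struct s SA" and ar: "\<forall>f\<in>sig_syms s. sig_ar s f \<le> r"
      and GG: "gaifman s SA \<in> \<G>" using sA unfolding struct_class_def by auto
    obtain \<pi> :: "'v set set pmf" where
      \<pi>: "\<forall>F\<in>set_pmf \<pi>. F \<subseteq> edges (gaifman s SA) \<and> p (delete_edges (gaifman s SA) F) \<le> k"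
         "\<forall>e\<in>edges (gaifman s SA). measure_pmf.prob \<pi> {F. e \<in> F} \<le> e'"
      using bspec[OF k GG] by (elim exE conjE)
    show ?thesis
      by (rule fwd_one[OF gp mo mu inf sig sAs ar \<epsilon> \<pi>(1)]) (use \<pi>(2) in \<open>simp add: e'_def\<close>)
  qed
  show "\<exists>k. \<forall>(s, SA)\<in>struct_class \<G> r. \<exists>SB :: 'v struct.
        is_struct s SB \<and> p (gaifman s SB) \<le> k \<and> d_opt s SA SB \<le> ereal \<epsilon>"
  proof (rule exI[of _ k], rule ballI)
    fix x assume x: "x \<in> struct_class \<G> r"
    obtain s SA where xs: "x = (s, SA)" by (cases x)
    show "case x of (s, SA) \<Rightarrow> \<exists>SB :: 'v struct. is_struct s SB \<and> p (gaifman s SB) \<le> k \<and> d_opt s SA SB \<le> ereal \<epsilon>"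
      using one[of s SA] x xs by simp
  qed
qed

theorem lemma25:
  fixes p :: "'v graph \<Rightarrow> nat" and \<G> :: "'v graph set" and r :: nat
  assumes "infinite (UNIV :: 'v set)"
    and "graph_parameter p"
    and "monotone_param p"
    and "max_on_disjoint_union p"
    and "\<forall>G\<in>\<G>. wf_graph G"
    and "r \<ge> 2"
  shows "frac_edge_fragile p \<G> \<longleftrightarrow> pliable p (struct_class \<G> r)"
proof
  assume "frac_edge_fragile p \<G>"
  then show "pliable p (struct_class \<G> r)" by (rule forward[OF assms(2,3,4,1)])
next
  assume "pliable p (struct_class \<G> r)"
  then show "frac_edge_fragile p \<G>" by (rule backward[OF assms(2,3,4,5,6)])
qed


end
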